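(* In the setting of the context, assume that for every $k$ the map $\epsilon\mapsto\pi_\epsilon(k)$ is $C^1$ and that $\epsilon\mapsto\eta_{k,\epsilon}$ is $C^1$ as a distribution of order one with derivative $\nu_{k,\epsilon}$. Let $z\in Z$ with $|z|=n+1$, let $k=(k_0,\dots,k_n)$ be the family indices compatible with $z$, and let $\mathbb P_{z,j,\epsilon}=\eta_{k_0,\epsilon}\times\cdots\times\eta_{k_{j-1},\epsilon}\times\nu_{k_j,\epsilon}\times\eta_{k_{j+1},\epsilon}\times\cdots\times\eta_{k_n,\epsilon}$. Then $a_{k,\epsilon}$ and $B_{k,\epsilon}(\hat h)$ are differentiable in $\epsilon$, and $$\partial_\epsilon a_{k,\epsilon}=\sum_{j=0}^n\partial_\epsilon\pi_{k_j,\epsilon}\prod_{i\ne j}\pi_{k_i,\epsilon},$$ $$\partial_\epsilon B_{k,\epsilon}(\hat h)=\sum_{j=0}^n\int_{I_{k_0}\times\cdots\times I_{k_n}}\Big[\hat h'\circ g_{z,u_0,\dots,u_n}\,\partial_{u_j}g_{z,u_0,\dots,u_n}\,|g'_{z,u_0,\dots,u_n}|+\hat h\circ g_{z,u_0,\dots,u_n}\,\partial_{u_j}|g'_{z,u_0,\dots,u_n}|\Big]\,d\mathbb P_{z,j,\epsilon}(u_0,\dots,u_n),$$ $$\partial_\epsilon\hat\psi_z(\epsilon,\cdot)=\partial_\epsilon a_{k,\epsilon}\cdot B_{k,\epsilon}(\hat h)(\cdot)+a_{k,\epsilon}\cdot\partial_\epsilon B_{k,\epsilon}(\hat h)(\c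dot).$$
   Context: $X=[0,1]$, $\Delta\subset X$ closed subinterval. For $k=1,\dots,\ell$, $I_k$ compact interval and $T_{k,u}$ ($u\in I_k$) piecewise $C^1$ maps of $X$ with countably many monotone full branches, $\Delta$ a union of monotonicity intervals; branches are labelled $s\in S=S^{in}\cup S^{out}$ ($S^{in}$: branches with domain in $\Delta$), each label carrying its family index $k$; $g_{s,k,u}$ inverse branches. $\mathbb P_\epsilon$ is a probability on $\{1,\dots,\ell\}\times\mathbb R$ supported on $\bigcup_k\{k\}\times I_k$, with marginal $\pi_\epsilon$ on $\{1,\dots,\ell\}$ (write $\pi_{k,\epsilon}=\pi_\epsilon(k)$) and conditional measures $\eta_{k,\epsilon}$ on $I_k$. $Z$: words $z=z_0\cdots z_n$, $z_0\in S^{in}$, $z_i\in S^{out}$; $g_{z,u_0,\dots,u_n}=g_{z_0,k_0,u_0}\circ\cdots\circ g_{z_n,k_n,u_n}$, assumed $C^3$. $\hat h$ is a $C^1$ function on $\Delta$ (the stationary density of the induced system at $\epsilon=0$). $a_{k,\epsilon}=\prod_{j=0}^{|z|-1}\pi_{k_j,\epsilon}$; $B_{k,\epsilon}(\Phi)=\int_{I_{k_0}\times\cdots\times I_{k_n}}\Phi\circ g_{z,u_0,\dots,u_n}|g'_{z,u_0,\dots,u_n}|\,d\eta_{k_0,\epsilon}\cdots d\eta_{k_n,\epsilon}$; $\hat\psi_z(\epsilon,\cdot)=\int\hat h\circ g_{z,\hat\omega}|g'_{z,\hat\omega}|\,d\mathbb P_\epsilon^{\mathbb N}(\hat\omega)=a_{k,\epsilon}B_{k,\epsilon}(\hat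 h)$. "$\epsilon\mapsto\eta_{k,\epsilon}$ is $C^1$ as a distribution of order one": for every $C^1$ function $\varphi\colon I_k\to\mathbb R$, $\partial_\epsilon\int_{I_k}\varphi\,d\eta_{k,\epsilon}=\int_{I_k}\frac{d\varphi}{du}\,d\nu_{k,\epsilon}$, where $\nu_{k,\epsilon}$, $\epsilon\in V$, is a continuous family of signed measures of bounded total variation. *)

theory Defs
  imports "HOL-Probability.Probability"
begin

text \<open>Composition of the inverse branches along a word z = z_0 ... z_n:
  gb j t is the inverse branch g_{z_j,k_j,t}; the result is
  g_{z,u_0,...,u_n} = g_{z_0,k_0,u_0} o ... o g_{z_n,k_n,u_n}.\<close>
definition gcomp :: "(nat \<Rightarrow> real \<Rightarrow> real \<Rightarrow> real) \<Rightarrow> nat \<Rightarrow> (nat \<Rightarrow> real) \<Rightarrow> real \<Rightarrow> real" where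
  "gcomp gb n u x = foldr (\<lambda>j f. gb j (u j) \<circ> f) [0..<Suc n] id x"

definition gvec :: "(nat \<Rightarrow> real \<Rightarrow> real \<Rightarrow> real) \<Rightarrow> nat \<Rightarrow> (nat \<Rightarrow> real) \<Rightarrow> real" where
  "gvec gb n w = gcomp gb n w (w (Suc n))"

definition gbox :: "(nat \<Rightarrow> real set) \<Rightarrow> (nat \<Rightarrow> nat) \<Rightarrow> nat \<Rightarrow> (nat \<Rightarrow> real) set" where
  "gbox I k n = {w. (\<forall>j\<le>n. w j \<in> I (k j)) \<and> w (Suc n) \<in> {0..1}}"

definition pderiv_box :: "(nat \<Rightarrow> real) set \<Rightarrow> nat \<Rightarrow> ((nat \<Rightarrow> real) \<Rightarrow> real) \<Rightarrow> (nat \<Rightarrow> real) \<Rightarrow> real" where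
  "pderiv_box B i f w = (SOME d. ((\<lambda>t. f (w(i := t))) has_real_derivative d) (at (w i) within {t. w(i := t) \<in> B}))"

fun Ck_on :: "nat \<Rightarrow> nat set \<Rightarrow> (nat \<Rightarrow> real) set \<Rightarrow> ((nat \<Rightarrow> real) \<Rightarrow> real) \<Rightarrow> bool" where
  "Ck_on 0 N B f = continuous_on B f"
| "Ck_on (Suc m) N B f = (continuous_on B f \<and>
     (\<forall>i\<in>N. (\<forall>w\<in>B. ((\<lambda>t. f (w(i := t))) has_real_derivative pderiv_box B i f w)
                        (at (w i) within {t. w(i := t) \<in> B}))
           \<and> Ck_on m N B (pderiv_box B i f)))"

text \<open>Partial derivative d/du_i of g_{z,u}(x) (i \<le> n), and for i = n+1 the
  x-derivative g'_{z,u}(x).\<close>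
definition gder :: "(nat \<Rightarrow> real \<Rightarrow> real \<Rightarrow> real) \<Rightarrow> (nat \<Rightarrow> real set) \<Rightarrow> (nat \<Rightarrow> nat) \<Rightarrow> nat
                    \<Rightarrow> nat \<Rightarrow> (nat \<Rightarrow> real) \<Rightarrow> real \<Rightarrow> real" where
  "gder gb I k n i u x = pderiv_box (gbox I k n) i (gvec gb n) (u(Suc n := x))"

definition absgder_der :: "(nat \<Rightarrow> real \<Rightarrow> real \<Rightarrow> real) \<Rightarrow> (nat \<Rightarrow> real set) \<Rightarrow> (nat \<Rightarrow> nat) \<Rightarrow> nat
                    \<Rightarrow> nat \<Rightarrow> (nat \<Rightarrow> real) \<Rightarrow> real \<Rightarrow> real" where
  "absgder_der gb I k n j u x =
     pderiv_box (gbox I k n) j (\<lambda>w. \<bar>pderiv_box (gbox I k n) (Suc n) (gvec gb n) w\<bar>) (u(Suc n := x))"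

definition a_word :: "(nat \<Rightarrow> real) \<Rightarrow> nat \<Rightarrow> (nat \<Rightarrow> nat) \<Rightarrow> real" where
  "a_word p n k = (\<Prod>j\<le>n. p (k j))"

definition B_word :: "(nat \<Rightarrow> real measure) \<Rightarrow> (nat \<Rightarrow> real \<Rightarrow> real \<Rightarrow> real) \<Rightarrow> (nat \<Rightarrow> real set)
                      \<Rightarrow> (nat \<Rightarrow> nat) \<Rightarrow> nat \<Rightarrow> (real \<Rightarrow> real) \<Rightarrow> real \<Rightarrow> real" where
  "B_word eta gb I k n \<Phi> x =
     set_lebesgue_integral (PiM {..n} (\<lambda>j. eta (k j))) (PiE {..n} (\<lambda>j. I (k j)))
       (\<lambda>u. \<Phi> (gcomp gb n u x) * \<bar>gder gb I k n (Suc n) u x\<bar>)"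

text \<open>The product measure eta_{k_0} x ... x mu (at slot j) x ... x eta_{k_n}.
  With mu = nu^+ resp. nu^- this gives the two parts of the signed measure P_{z,j,eps}.\<close>
definition Pz :: "(nat \<Rightarrow> real measure) \<Rightarrow> real measure \<Rightarrow> nat \<Rightarrow> (nat \<Rightarrow> nat) \<Rightarrow> nat \<Rightarrow> (nat \<Rightarrow> real) measure" where
  "Pz eta mu j k n = PiM {..n} (\<lambda>i. if i = j then mu else eta (k i))"

text \<open>Integral of F over I_{k_0} x ... x I_{k_n} against the signed measure P_{z,j,eps},
  where nu_{k_j,eps} = nup - num.\<close>
definition Pz_int :: "(nat \<Rightarrow> real measure) \<Rightarrow> real measure \<Rightarrow> real measure \<Rightarrow> nat \<Rightarrow> (nat \<Rightarrow> nat)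
                      \<Rightarrow> (nat \<Rightarrow> real set) \<Rightarrow> nat \<Rightarrow> ((nat \<Rightarrow> real) \<Rightarrow> real) \<Rightarrow> real" where
  "Pz_int eta nup num j k I n F =
     set_lebesgue_integral (Pz eta nup j k n) (PiE {..n} (\<lambda>i. I (k i))) F
   - set_lebesgue_integral (Pz eta num j k n) (PiE {..n} (\<lambda>i. I (k i))) F"

text \<open>psi_hat_z(eps, x) = a_{k,eps} B_{k,eps}(h_hat)(x) (the identity given in the setting).\<close>
definition psi_hat :: "(nat \<Rightarrow> real) \<Rightarrow> (nat \<Rightarrow> real measure) \<Rightarrow> (nat \<Rightarrow> real \<Rightarrow> real \<Rightarrow> real) \<Rightarrow> (nat \<Rightarrow> real set)
                      \<Rightarrow> (nat \<Rightarrow> nat) \<Rightarrow> nat \<Rightarrow> (real \<Rightarrow> real) \<Rightarrow> real \<Rightarrow> real" where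
  "psi_hat p eta gb I k n hh x = a_word p n k * B_word eta gb I k n hh x"

end

theory Submission
  imports Defs
begin

lemma cont_bound_pos:
  fixes f :: "'a::topological_space \<Rightarrow> real"
  assumes "compact J" "continuous_on J f"
  obtains B where "B > 0" "\<And>t. t \<in> J \<Longrightarrow> \<bar>f t\<bar> \<le> B"
proof -
  have "bounded (f ` J)" using compact_continuous_image[OF assms(2,1)] compact_imp_bounded by blast
  then obtain B where "B > 0" "\<forall>x\<in>f ` J. norm x \<le> B" using bounded_pos by metis
  then show ?thesis using that by auto
qed

lemma cont_set_integrable:
  fixes f :: "real \<Rightarrow> real"
  assumes "finite_measure M" "sets M = sets borel" "compact J" "continuous_on J f"
  shows "set_integrable M J f"
proof -
  interpret finite_measure M by fact
  have m: "(\<lambda>t. indicator J t *\<^sub>R f t) \<in> borel_measurable M"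
    using borel_measurable_continuous_on_indicator[of J f] assms compact_imp_closed[OF assms(3)]
    by (simp add: measurable_cong_sets[OF assms(2) refl])
  obtain B where B: "B > 0" "\<And>t. t \<in> J \<Longrightarrow> \<bar>f t\<bar> \<le> B" using cont_bound_pos[OF assms(3,4)] by blast
  have "AE x in M. norm (indicator J x *\<^sub>R f x) \<le> B"
    using B by (auto simp: indicator_def)
  then show ?thesis unfolding set_integrable_def using integrable_const_bound[OF _ m] by blast
qed

lemma sint_diff_bound:
  fixes f g :: "real \<Rightarrow> real"
  assumes "finite_measure M" "sets M = sets borel" "compact J" "continuous_on J f" "continuous_on J g"
    and "0 \<le> e" and "\<And>t. t \<in> J \<Longrightarrow> \<bar>f t - g t\<bar> \<le> e"
  shows "\<bar>set_lebesgue_integral M J f - set_lebesgue_integral M J g\<bar> \<le> e * measure M (space M)"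
proof -
  interpret finite_measure M by fact
  have i1: "set_integrable M J f" "set_integrable M J g"
    using cont_set_integrable assms by blast+
  have "set_lebesgue_integral M J f - set_lebesgue_integral M J g = set_lebesgue_integral M J (\<lambda>t. f t - g t)"
    using set_integral_diff(2)[OF i1] by simp
  also have "\<dots> = integral\<^sup>L M (\<lambda>t. indicator J t * (f t - g t))"
    unfolding set_lebesgue_integral_def by simp
  finally have eq: "set_lebesgue_integral M J f - set_lebesgue_integral M J g = integral\<^sup>L M (\<lambda>t. indicator J t * (f t - g t))" .
  have ii: "integrable M (\<lambda>t. indicator J t * (f t - g t))"
    using set_integral_diff(1)[OF i1] unfolding set_integrable_def by simp
  have "norm (integral\<^sup>L M (\<lambda>t. indicator J t * (f t - g t))) \<le> integral\<^sup>L M (\<lambda>t. norm (indicator J t * (f t - g t)))"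
    by (rule integral_norm_bound)
  also have "\<dots> \<le> integral\<^sup>L M (\<lambda>t. e)"
    apply (rule integral_mono)
    using ii apply (simp add: integrable_norm)
     apply simp
    using assms(6,7) by (auto simp: indicator_def)
  also have "\<dots> = e * measure M (space M)" by simp
  finally show ?thesis using eq by simp
qed

lemma weier1:
  fixes f :: "real \<Rightarrow> real"
  assumes "compact J" "continuous_on J f" "0 < e"
  obtains g g' where "\<And>x. (g has_real_derivative g' x) (at x)" "continuous_on UNIV g'"
    "\<And>x. x \<in> J \<Longrightarrow> \<bar>f x - g x\<bar> < e"
proof -
  obtain g where g: "polynomial_function g" "\<forall>x\<in>J. norm (f x - g x) < e"
    using Stone_Weierstrass_polynomial_function[OF assms] by blast
  obtain p' where "polynomial_function p'" "\<And>x. (g has_vector_derivative p' x) (at x)"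
    using has_vector_derivative_polynomial_function[OF g(1)] by blast
  then show ?thesis using that[of g p'] g continuous_on_polymonial_function
    by (auto simp: has_real_derivative_iff_has_vector_derivative)
qed

lemma W_cont:
  fixes E :: "real \<Rightarrow> real measure" and J :: "real set" and f :: "real \<Rightarrow> real" and D :: "real \<Rightarrow> (real \<Rightarrow> real) \<Rightarrow> real"
  assumes V: "open V" and E: "\<forall>s\<in>V. prob_space (E s) \<and> sets (E s) = sets borel"
    and J: "compact J"
    and C1: "\<forall>\<phi> \<phi>'. (\<forall>u\<in>J. (\<phi> has_real_derivative \<phi>' u) (at u within J)) \<and> continuous_on J \<phi>'
               \<longrightarrow> (\<forall>e\<in>V. ((\<lambda>e'. set_lebesgue_integral (E e') J \<phi>) has_real_derivative D e \<phi>') (at e))"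
    and f: "continuous_on J f"
  shows "continuous_on V (\<lambda>s. set_lebesgue_integral (E s) J f)"
proof -
  have "\<forall>m::nat. \<exists>g g'. (\<forall>x. (g has_real_derivative g' x) (at x)) \<and> continuous_on UNIV g'
           \<and> (\<forall>x\<in>J. \<bar>f x - g x\<bar> < 1/Suc m)"
  proof
    fix m :: nat
    have "0 < 1 / real (Suc m)" by simp
    from weier1[OF J f this] show "\<exists>g g'. (\<forall>x. (g has_real_derivative g' x) (at x)) \<and> continuous_on UNIV g'
           \<and> (\<forall>x\<in>J. \<bar>f x - g x\<bar> < 1/Suc m)" by metis
  qed
  then obtain G G' where GG: "\<And>m x. (G m has_real_derivative G' m x) (at x)" "\<And>m. continuous_on UNIV (G' m)"
      "\<And>m x. x \<in> J \<Longrightarrow> \<bar>f x - G m x\<bar> < 1/Suc m"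
    by metis
  have Gc: "continuous_on J (G m)" for m
    using GG(1) by (meson DERIV_isCont continuous_at_imp_continuous_on)
  have cont: "continuous_on V (\<lambda>s. set_lebesgue_integral (E s) J (G m))" for m
  proof -
    have "\<forall>u\<in>J. (G m has_real_derivative G' m u) (at u within J)"
      using GG(1) has_field_derivative_at_within by blast
    moreover have "continuous_on J (G' m)" using GG(2) continuous_on_subset by blast
    ultimately have "\<forall>e\<in>V. ((\<lambda>e'. set_lebesgue_integral (E e') J (G m)) has_real_derivative D e (G' m)) (at e)"
      using C1 by blast
    then show ?thesis by (meson DERIV_isCont continuous_at_imp_continuous_on)
  qed
  have unif: "uniform_limit V (\<lambda>m s. set_lebesgue_integral (E s) J (G m)) (\<lambda>s. set_lebesgue_integral (E s) J f) sequentially"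
    unfolding uniform_limit_iff
  proof (intro allI impI)
    fix e :: real assume e: "0 < e"
    obtain N :: nat where N: "1 / Suc N < e"
      using e by (metis nat_approx_posE)
    show "\<forall>\<^sub>F m in sequentially. \<forall>s\<in>V. dist (set_lebesgue_integral (E s) J (G m)) (set_lebesgue_integral (E s) J f) < e"
      unfolding eventually_sequentially
    proof (intro exI allI impI ballI)
      fix m s assume m: "N \<le> m" and s: "s \<in> V"
      interpret prob_space "E s" using E s by blast
      have fm: "finite_measure (E s)" by (simp add: finite_measure_axioms)
      have "\<bar>set_lebesgue_integral (E s) J (G m) - set_lebesgue_integral (E s) J f\<bar> \<le> (1/Suc m) * measure (E s) (space (E s))"
        apply (rule sint_diff_bound[OF fm _ J Gc f])
        using E s GG(3) by (auto simp: abs_minus_commute less_imp_le)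
      also have "\<dots> = 1 / Suc m" by (simp add: prob_space)
      also have "\<dots> \<le> 1 / Suc N" using m by (simp add: frac_le)
      finally show "dist (set_lebesgue_integral (E s) J (G m)) (set_lebesgue_integral (E s) J f) < e"
        using N by (simp add: dist_real_def)
    qed
  qed
  show ?thesis
    by (rule uniform_limit_theorem[OF _ unif]) (auto simp: cont)
qed

lemma BS:
  fixes P Q :: "real \<Rightarrow> real measure" and lo hi :: real and J :: "real set"
  assumes V: "open V" and e: "e \<in> V" and J: "J = {lo..hi}" "lo \<le> hi"
   and PQ: "\<forall>s\<in>V. finite_measure (P s) \<and> sets (P s) = sets borel \<and> finite_measure (Q s) \<and> sets (Q s) = sets borel"
   and C: "\<forall>f::real\<Rightarrow>real. continuous_on J f \<longrightarrow> continuous_on V (\<lambda>s. set_lebesgue_integral (P s) J f - set_lebesgue_integral (Q s) J f)"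
  obtains \<delta> Mb where "\<delta> > 0" "cball e \<delta> \<subseteq> V"
    "\<And>s (f::real\<Rightarrow>real). s \<in> cball e \<delta> \<Longrightarrow> continuous_on J f \<Longrightarrow> (\<forall>t\<in>J. \<bar>f t\<bar> \<le> 1) \<Longrightarrow>
        \<bar>set_lebesgue_integral (P s) J f - set_lebesgue_integral (Q s) J f\<bar> \<le> Mb"
proof -
  obtain r where r: "r > 0" "cball e r \<subseteq> V" using V e open_contains_cball by blast
  have cJ: "compact J" using J by simp
  define T where "T s \<phi> = set_lebesgue_integral (P s) J (apply_bcontfun \<phi>) - set_lebesgue_integral (Q s) J (apply_bcontfun \<phi>)"
    for s and \<phi> :: "real \<Rightarrow>\<^sub>C real"
  have contJ: "continuous_on J (apply_bcontfun \<phi>)" for \<phi> :: "real \<Rightarrow>\<^sub>C real" by simp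
  have Tlin: "T s (\<phi> + c *\<^sub>R \<psi>) = T s \<phi> + c * T s \<psi>" if s: "s \<in> V" for s c \<phi> \<psi>
  proof -
    have iP: "set_integrable (P s) J (apply_bcontfun \<phi>)" "set_integrable (P s) J (apply_bcontfun \<psi>)"
      "set_integrable (Q s) J (apply_bcontfun \<phi>)" "set_integrable (Q s) J (apply_bcontfun \<psi>)"
      using cont_set_integrable PQ s cJ contJ by blast+
    have a: "set_lebesgue_integral M J (apply_bcontfun (\<phi> + c *\<^sub>R \<psi>)) = set_lebesgue_integral M J (apply_bcontfun \<phi>) + c * set_lebesgue_integral M J (apply_bcontfun \<psi>)"
      if "set_integrable M J (apply_bcontfun \<phi>)" "set_integrable M J (apply_bcontfun \<psi>)" for M
    proof -
      have "set_lebesgue_integral M J (apply_bcontfun (\<phi> + c *\<^sub>R \<psi>)) = set_lebesgue_integral M J (\<lambda>t. apply_bcontfun \<phi> t + c * apply_bcontfun \<psi> t)"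
        by simp
      also have "\<dots> = set_lebesgue_integral M J (apply_bcontfun \<phi>) + set_lebesgue_integral M J (\<lambda>t. c * apply_bcontfun \<psi> t)"
        by (rule set_integral_add(2)) (use that in \<open>auto intro: set_integrable_mult_right\<close>)
      also have "set_lebesgue_integral M J (\<lambda>t. c * apply_bcontfun \<psi> t) = c * set_lebesgue_integral M J (apply_bcontfun \<psi>)"
        by (rule set_integral_mult_right)
      finally show ?thesis .
    qed
    show ?thesis unfolding T_def using a[OF iP(1,2)] a[OF iP(3,4)] by (simp add: algebra_simps)
  qed
  define Cs where "Cs s = measure (P s) (space (P s)) + measure (Q s) (space (Q s))" for s
  have Cnn: "0 \<le> Cs s" for s unfolding Cs_def by simp
  have Tbound: "\<bar>T s \<phi>\<bar> \<le> Cs s * norm \<phi>" if s: "s \<in> V" for s \<phi>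
  proof -
    have b: "\<bar>set_lebesgue_integral M J (apply_bcontfun \<phi>)\<bar> \<le> norm \<phi> * measure M (space M)"
      if "finite_measure M" "sets M = sets borel" for M
      using sint_diff_bound[OF that cJ contJ, of "\<lambda>_. 0" "norm \<phi>"]
      using norm_bounded[of \<phi>] by (auto simp: set_lebesgue_integral_def)
    show ?thesis unfolding T_def Cs_def
      using b[of "P s"] b[of "Q s"] PQ s by (auto simp: algebra_simps)
  qed
  have Tcont: "continuous_on UNIV (T s)" if s: "s \<in> V" for s
  proof (rule lipschitz_on_continuous_on, rule lipschitz_onI)
    fix \<phi> \<psi> :: "real \<Rightarrow>\<^sub>C real"
    have "T s \<phi> = T s (\<psi> + 1 *\<^sub>R (\<phi> - \<psi>))" by simp
    also have "\<dots> = T s \<psi> + T s (\<phi> - \<psi>)" using Tlin[OF s, of \<psi> 1 "\<phi> - \<psi>"] by simp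
    finally have "dist (T s \<phi>) (T s \<psi>) = \<bar>T s (\<phi> - \<psi>)\<bar>" by (simp add: dist_real_def)
    also have "\<dots> \<le> Cs s * dist \<phi> \<psi>" using Tbound[OF s] by (simp add: dist_norm)
    finally show "dist (T s \<phi>) (T s \<psi>) \<le> Cs s * dist \<phi> \<psi>" .
  qed (rule Cnn)
  define A where "A N = {\<phi>. \<forall>s\<in>cball e r. \<bar>T s \<phi>\<bar> \<le> real N}" for N :: nat
  have Aclosed: "closed (A N)" for N
  proof -
    have eq: "A N = (\<Inter>s\<in>cball e r. {\<phi>. \<bar>T s \<phi>\<bar> \<le> real N})" unfolding A_def by blast
    have "closed {\<phi>. \<bar>T s \<phi>\<bar> \<le> real N}" if "s \<in> cball e r" for s
    proof (rule closed_Collect_le)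
      show "continuous_on UNIV (\<lambda>\<phi>. \<bar>T s \<phi>\<bar>)"
        using Tcont[of s] that r by (intro continuous_on_rabs) blast
    qed (rule continuous_on_const)
    then show ?thesis unfolding eq by (intro closed_INT) blast
  qed
  have Amem: "\<phi> \<in> \<Union>(range A)" for \<phi>
  proof -
    have "continuous_on V (\<lambda>s. T s \<phi>)" unfolding T_def by (rule C[rule_format]) simp
    then have "continuous_on (cball e r) (\<lambda>s. T s \<phi>)" using r continuous_on_subset by blast
    then obtain B where B: "B > 0" "\<And>s. s \<in> cball e r \<Longrightarrow> \<bar>T s \<phi>\<bar> \<le> B"
      using cont_bound_pos[OF compact_cball] by blast
    have "\<forall>s\<in>cball e r. \<bar>T s \<phi>\<bar> \<le> real (nat \<lceil>B\<rceil>)"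
    proof
      fix s assume "s \<in> cball e r"
      then have "\<bar>T s \<phi>\<bar> \<le> B" by (rule B(2))
      also have "B \<le> real (nat \<lceil>B\<rceil>)" by (rule real_nat_ceiling_ge)
      finally show "\<bar>T s \<phi>\<bar> \<le> real (nat \<lceil>B\<rceil>)" .
    qed
    then have "\<phi> \<in> A (nat \<lceil>B\<rceil>)" unfolding A_def by simp
    then show ?thesis by blast
  qed
  have Acover: "\<Union>(range A) = UNIV" using Amem by blast
  have "\<exists>N. interior (A N) \<noteq> {}"
  proof (rule ccontr)
    assume "\<not> ?thesis"
    then have "\<And>T. T \<in> range A \<Longrightarrow> closedin euclidean T \<and> euclidean interior_of T = {}"
      using Aclosed by (auto simp: euclidean_interior_of)
    then have "euclidean interior_of \<Union>(range A) = {}"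
      apply (intro Baire_category_alt)
      subgoal using completely_metrizable_space_euclidean by blast
      subgoal by simp
      subgoal by blast
      done
    then show False using Acover by (simp add: euclidean_interior_of)
  qed
  then obtain N \<phi>0 where "\<phi>0 \<in> interior (A N)" by blast
  then obtain \<rho> where rho: "\<rho> > 0" "ball \<phi>0 \<rho> \<subseteq> A N" using mem_interior by blast
  show ?thesis
  proof (rule that[of r "4 * real N / \<rho>"])
    show "0 < r" "cball e r \<subseteq> V" using r by auto
    fix s and f :: "real \<Rightarrow> real" assume s: "s \<in> cball e r" and f: "continuous_on J f" and f1: "\<forall>t\<in>J. \<bar>f t\<bar> \<le> 1"
    have sV: "s \<in> V" using s r by auto
    define cl where "cl t = max lo (min hi t)" for t
    have clJ: "cl t \<in> J" for t using J unfolding cl_def by auto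
    define g where "g t = f (cl t)" for t
    have clc: "continuous_on UNIV cl" unfolding cl_def by (intro continuous_intros)
    have gc: "continuous_on UNIV g" unfolding g_def
      by (rule continuous_on_compose2[OF f clc]) (use clJ in blast)
    have g1: "norm (g t) \<le> 1" for t unfolding g_def using f1 clJ by auto
    have gb: "g \<in> bcontfun" using bcontfun_normI[OF gc g1] .
    define \<phi> where "\<phi> = Bcontfun g"
    have ap: "apply_bcontfun \<phi> = g" unfolding \<phi>_def using gb by (simp add: Bcontfun_inverse)
    have nphi: "norm \<phi> \<le> 1" using norm_bound[of \<phi> 1] g1 ap by auto
    have "\<phi>0 + (\<rho>/2) *\<^sub>R \<phi> \<in> ball \<phi>0 \<rho>"
    proof -
      have "dist \<phi>0 (\<phi>0 + (\<rho>/2) *\<^sub>R \<phi>) = \<rho>/2 * norm \<phi>" using rho by (simp add: dist_norm)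
      also have "\<dots> \<le> \<rho>/2" using nphi rho by (simp add: mult_left_le)
      finally show ?thesis using rho by simp
    qed
    then have "\<phi>0 + (\<rho>/2) *\<^sub>R \<phi> \<in> A N" using rho(2) by (rule subsetD[rotated])
    then have "\<forall>s\<in>cball e r. \<bar>T s (\<phi>0 + (\<rho>/2) *\<^sub>R \<phi>)\<bar> \<le> real N" by (simp add: A_def)
    then have t1: "\<bar>T s (\<phi>0 + (\<rho>/2) *\<^sub>R \<phi>)\<bar> \<le> real N" using s by (rule bspec)
    have "\<phi>0 \<in> A N" using rho by (simp add: subsetD)
    then have "\<forall>s\<in>cball e r. \<bar>T s \<phi>0\<bar> \<le> real N" by (simp add: A_def)
    then have t0: "\<bar>T s \<phi>0\<bar> \<le> real N" using s by (rule bspec)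
    have lin: "T s (\<phi>0 + (\<rho>/2) *\<^sub>R \<phi>) = T s \<phi>0 + (\<rho>/2) * T s \<phi>" by (rule Tlin[OF sV])
    have "\<bar>(\<rho>/2) * T s \<phi>\<bar> \<le> 2 * real N" using t1 t0 unfolding lin by linarith
    then have "(\<rho>/2) * \<bar>T s \<phi>\<bar> \<le> 2 * real N" using rho by (simp add: abs_mult)
    then have "\<bar>T s \<phi>\<bar> \<le> 4 * real N / \<rho>" using rho by (simp add: field_simps)
    moreover have "T s \<phi> = set_lebesgue_integral (P s) J f - set_lebesgue_integral (Q s) J f"
    proof -
      have "set_lebesgue_integral M J g = set_lebesgue_integral M J f" for M
      proof -
        have "indicator J t *\<^sub>R g t = indicator J t *\<^sub>R f t" for t
          by (cases "t \<in> J") (auto simp: g_def cl_def J)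
        then show ?thesis unfolding set_lebesgue_integral_def by presburger
      qed
      then show ?thesis unfolding T_def ap by simp
    qed
    ultimately show "\<bar>set_lebesgue_integral (P s) J f - set_lebesgue_integral (Q s) J f\<bar> \<le> 4 * real N / \<rho>" by simp
  qed
qed

definition bx :: "nat \<Rightarrow> (nat \<Rightarrow> real set) \<Rightarrow> (nat \<Rightarrow> real) set" where
  "bx n J = PiE {..n} J"

definition tens :: "nat \<Rightarrow> (nat \<Rightarrow> real \<Rightarrow> real) list \<Rightarrow> (nat \<Rightarrow> real) \<Rightarrow> real" where
  "tens n cs u = sum_list (map (\<lambda>c. \<Prod>i\<le>n. c i (u i)) cs)"

definition okT :: "nat \<Rightarrow> (nat \<Rightarrow> real set) \<Rightarrow> (nat \<Rightarrow> real \<Rightarrow> real) list \<Rightarrow> bool" where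
  "okT n J cs = (\<forall>c\<in>set cs. \<forall>i\<le>n. continuous_on (J i) (c i))"

definition mulT :: "(nat \<Rightarrow> real \<Rightarrow> real) list \<Rightarrow> (nat \<Rightarrow> real \<Rightarrow> real) list \<Rightarrow> (nat \<Rightarrow> real \<Rightarrow> real) list" where
  "mulT cs ds = concat (map (\<lambda>c. map (\<lambda>d. (\<lambda>i t. c i t * d i t)) ds) cs)"

lemma tens_Nil[simp]: "tens n [] u = 0" by (simp add: tens_def)
lemma tens_Cons[simp]: "tens n (c # cs) u = (\<Prod>i\<le>n. c i (u i)) + tens n cs u" by (simp add: tens_def)
lemma tens_append: "tens n (cs @ ds) u = tens n cs u + tens n ds u" by (simp add: tens_def)

lemma tens_mulT: "tens n (mulT cs ds) u = tens n cs u * tens n ds u"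
proof (induction cs)
  case Nil then show ?case by (simp add: mulT_def)
next
  case (Cons c cs)
  have "tens n (map (\<lambda>d. (\<lambda>i t. c i t * d i t)) ds) u = (\<Prod>i\<le>n. c i (u i)) * tens n ds u"
    by (induction ds) (simp_all add: prod.distrib algebra_simps)
  then show ?case using Cons by (simp add: mulT_def tens_append algebra_simps)
qed

lemma okT_append: "okT n J (cs @ ds) = (okT n J cs \<and> okT n J ds)" by (auto simp: okT_def)

lemma okT_mulT: "okT n J cs \<Longrightarrow> okT n J ds \<Longrightarrow> okT n J (mulT cs ds)"
  unfolding okT_def mulT_def by (auto intro!: continuous_intros)

lemma bx_PiE_UNIV: "bx n J = PiE UNIV (\<lambda>i. if i \<le> n then J i else {undefined})"
  unfolding bx_def by (auto simp: PiE_iff extensional_def split: if_splits)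

lemma compact_bx:
  assumes "\<And>i. i \<le> n \<Longrightarrow> compact (J i)"
  shows "compact (bx n J)"
proof -
  have "compactin (product_topology (\<lambda>i. euclidean) UNIV) (PiE UNIV (\<lambda>i. if i \<le> n then J i else {undefined}))"
    unfolding compactin_PiE using assms by auto
  then show ?thesis unfolding bx_PiE_UNIV euclidean_product_topology by simp
qed

lemma cont_coord: "continuous_on S (\<lambda>u::nat\<Rightarrow>real. c (u i))" if "continuous_on (J i) c" "\<forall>u\<in>S. u i \<in> J i"
  using continuous_on_compose2[OF that(1) continuous_on_subset[OF continuous_on_product_coordinates, of S i]] that(2)
  by blast

lemma cont_prod_term:
  fixes c :: "nat \<Rightarrow> real \<Rightarrow> real"
  assumes "\<forall>i\<le>n. continuous_on (J i) (c i)"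
  shows "continuous_on (bx n J) (\<lambda>u. \<Prod>i\<le>n. c i (u i))"
proof -
  have "continuous_on (bx n J) (\<lambda>u. c i (u i))" if "i \<in> {..n}" for i
    using assms that by (intro cont_coord[of J i]) (auto simp: bx_def)
  then show ?thesis
    using continuous_on_prod[where f="\<lambda>i u. c i (u i)" and S="{..n}" and s="bx n J"] by simp
qed

lemma cont_tens: "okT n J cs \<Longrightarrow> continuous_on (bx n J) (tens n cs)"
proof (induction cs)
  case Nil then show ?case by (simp add: tens_def)
next
  case (Cons c cs)
  then have "okT n J cs" "\<forall>i\<le>n. continuous_on (J i) (c i)" by (auto simp: okT_def)
  then show ?case using Cons cont_prod_term[of n J c]
    by (simp add: continuous_on_add)
qed

lemma ring_tens:
  assumes "\<And>i. i \<le> n \<Longrightarrow> compact (J i)"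
  shows "function_ring_on {tens n cs | cs. okT n J cs} (bx n J)"
proof
  show "compact (bx n J)" using compact_bx assms by blast
next
  fix f assume "f \<in> {tens n cs | cs. okT n J cs}"
  then show "continuous_on (bx n J) f" using cont_tens by blast
next
  fix f g assume "f \<in> {tens n cs | cs. okT n J cs}" "g \<in> {tens n cs | cs. okT n J cs}"
  then obtain cs ds where "f = tens n cs" "okT n J cs" "g = tens n ds" "okT n J ds" by blast
  have "(\<lambda>x. f x + g x) = tens n (cs @ ds)" "okT n J (cs @ ds)"
    using \<open>f = _\<close> \<open>g = _\<close> \<open>okT n J cs\<close> \<open>okT n J ds\<close> by (auto simp: tens_append okT_append)
  then show "(\<lambda>x. f x + g x) \<in> {tens n cs | cs. okT n J cs}" by blast
  have "(\<lambda>x. f x * g x) = tens n (mulT cs ds)" "okT n J (mulT cs ds)"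
    using \<open>f = _\<close> \<open>g = _\<close> \<open>okT n J cs\<close> \<open>okT n J ds\<close> by (auto simp: tens_mulT okT_mulT)
  then show "(\<lambda>x. f x * g x) \<in> {tens n cs | cs. okT n J cs}" by blast
next
  fix k :: real
  let ?c = "\<lambda>i (t::real). if i = 0 then k else 1"
  have "tens n [?c] = (\<lambda>_. k)"
    by (rule ext) (simp add: prod.If_cases lessThan_Suc_atMost[symmetric] atMost_atLeast0 atLeast0AtMost)
  moreover have "okT n J [?c]" by (auto simp: okT_def)
  ultimately show "(\<lambda>_. k) \<in> {tens n cs | cs. okT n J cs}" by force
next
  fix x y assume xy: "x \<in> bx n J" "y \<in> bx n J" "x \<noteq> y"
  then obtain i where i: "i \<le> n" "x i \<noteq> y i" unfolding bx_def using PiE_ext by (metis atMost_iff)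
  let ?c = "\<lambda>i' (t::real). if i' = i then t else 1"
  have "tens n [?c] u = u i" for u
  proof -
    have "tens n [?c] u = (\<Prod>ia\<le>n. if ia = i then u ia else 1)" by (simp add: tens_def)
    also have "\<dots> = u i" using i by (subst prod.delta) auto
    finally show ?thesis .
  qed
  moreover have "okT n J [?c]" unfolding okT_def
  proof (intro ballI allI impI)
    fix c ia assume "c \<in> set [?c]" "ia \<le> n"
    then show "continuous_on (J ia) (c ia)" by (cases "ia = i") (auto simp: continuous_on_id continuous_on_const)
  qed
  ultimately show "\<exists>f\<in>{tens n cs | cs. okT n J cs}. f x \<noteq> f y" using i
    by (intro bexI[of _ "tens n [?c]"]) auto
qed

lemma SW_tens:
  assumes "\<And>i. i \<le> n \<Longrightarrow> compact (J i)" "continuous_on (bx n J) F" "0 < e"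
  obtains cs where "okT n J cs" "\<And>u. u \<in> bx n J \<Longrightarrow> \<bar>F u - tens n cs u\<bar> < e"
proof -
  interpret function_ring_on "{tens n cs | cs. okT n J cs}" "bx n J" using ring_tens assms(1) by blast
  obtain g where "g \<in> {tens n cs | cs. okT n J cs}" "\<forall>x\<in>bx n J. \<bar>F x - g x\<bar> < e"
    using Stone_Weierstrass_basic[OF assms(2,3)] by blast
  then show ?thesis using that by blast
qed

definition nrm :: "'i set \<Rightarrow> ('i \<Rightarrow> 'a measure) \<Rightarrow> 'i \<Rightarrow> 'a measure" where
  "nrm I M = (\<lambda>i. if i \<in> I then M i else count_space {})"

lemma PiM_nrm: "PiM I (nrm I M) = PiM I M"
  unfolding nrm_def by (rule PiM_cong) auto

lemma psf_nrm:
  assumes "\<And>i. i \<in> I \<Longrightarrow> finite_measure (M i)"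
  shows "product_sigma_finite (nrm I M)"
proof (rule product_sigma_finite.intro)
  fix i
  show "sigma_finite_measure (nrm I M i)"
  proof -
    have "finite_measure (nrm I M i)"
      using assms by (cases "i \<in> I") (simp_all add: nrm_def finite_measure_count_space)
    then show ?thesis by (simp add: finite_measure_def)
  qed
qed

lemma finite_PiM:
  assumes "finite I" "\<And>i. i \<in> I \<Longrightarrow> finite_measure (M i)"
  shows "finite_measure (PiM I M)"
proof -
  interpret product_sigma_finite "nrm I M" using psf_nrm assms(2) by blast
  interpret finite_product_sigma_finite "nrm I M" I by standard (rule assms(1))
  have "emeasure (PiM I (nrm I M)) (PiE I (\<lambda>i. space (nrm I M i))) = (\<Prod>i\<in>I. emeasure (nrm I M i) (space (nrm I M i)))"
    by (rule measure_times) simp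
  also have "\<dots> \<noteq> \<infinity>"
    using assms(2) by (simp add: nrm_def ennreal_prod_eq_top finite_measure.emeasure_finite)
  finally have "emeasure (PiM I (nrm I M)) (space (PiM I (nrm I M))) \<noteq> \<infinity>" by (simp add: space_PiM)
  then show ?thesis unfolding PiM_nrm by (rule finite_measureI)
qed

lemma PiM_prod_int:
  fixes f :: "'i \<Rightarrow> 'a \<Rightarrow> real"
  assumes "finite I" "\<And>i. i \<in> I \<Longrightarrow> finite_measure (M i)" "\<And>i. i \<in> I \<Longrightarrow> integrable (M i) (f i)"
  shows "integral\<^sup>L (PiM I M) (\<lambda>x. \<Prod>i\<in>I. f i (x i)) = (\<Prod>i\<in>I. integral\<^sup>L (M i) (f i))"
    and "integrable (PiM I M) (\<lambda>x. \<Prod>i\<in>I. f i (x i))"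
proof -
  interpret product_sigma_finite "nrm I M" using psf_nrm assms(2) by blast
  have "integral\<^sup>L (PiM I (nrm I M)) (\<lambda>x. \<Prod>i\<in>I. f i (x i)) = (\<Prod>i\<in>I. integral\<^sup>L (nrm I M i) (f i))"
    by (rule product_integral_prod) (use assms in \<open>auto simp: nrm_def\<close>)
  then show "integral\<^sup>L (PiM I M) (\<lambda>x. \<Prod>i\<in>I. f i (x i)) = (\<Prod>i\<in>I. integral\<^sup>L (M i) (f i))"
    unfolding PiM_nrm by (simp add: nrm_def)
  have "integrable (PiM I (nrm I M)) (\<lambda>x. \<Prod>i\<in>I. f i (x i))"
    by (rule product_integrable_prod) (use assms in \<open>auto simp: nrm_def\<close>)
  then show "integrable (PiM I M) (\<lambda>x. \<Prod>i\<in>I. f i (x i))" unfolding PiM_nrm .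
qed

lemma prod_int_rev:
  fixes f :: "('i \<Rightarrow> 'a) \<Rightarrow> real"
  assumes I: "finite I" "i \<notin> I" and fin: "\<And>j. j \<in> insert i I \<Longrightarrow> finite_measure (M j)"
    and f: "integrable (PiM (insert i I) M) f"
  shows "integral\<^sup>L (PiM (insert i I) M) f = (\<integral>y. (\<integral>x. f (x(i:=y)) \<partial>PiM I M) \<partial>M i)"
proof -
  let ?N = "nrm (insert i I) M"
  interpret product_sigma_finite ?N using psf_nrm fin by blast
  have PN: "PiM (insert i I) ?N = PiM (insert i I) M" by (rule PiM_nrm)
  have PN2: "PiM I ?N = PiM I M" unfolding nrm_def by (rule PiM_cong) auto
  have Ni: "?N i = M i" by (simp add: nrm_def)
  interpret IP: finite_product_sigma_finite ?N I by standard (rule I(1))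
  interpret P: pair_sigma_finite "PiM I ?N" "?N i"
    by (intro pair_sigma_finite.intro IP.sigma_finite_measure_axioms sigma_finite_measures)
  have fN: "integrable (PiM (insert i I) ?N) f" using f PN by simp
  have fm: "f \<in> borel_measurable (PiM (insert i I) ?N)" using fN by auto
  have mm: "(\<lambda>(x, y). f (x(i := y))) \<in> borel_measurable (PiM I ?N \<Otimes>\<^sub>M ?N i)"
    using measurable_comp[OF measurable_add_dim fm] by (simp add: comp_def case_prod_beta)
  have "integrable (PiM I ?N \<Otimes>\<^sub>M ?N i) (\<lambda>(x, y). f (x(i := y)))"
  proof (subst integrable_iff_bounded, intro conjI mm)
    have "(\<integral>\<^sup>+ z. ennreal (norm (case z of (x, y) \<Rightarrow> f (x(i := y)))) \<partial>(PiM I ?N \<Otimes>\<^sub>M ?N i))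
        = (\<integral>\<^sup>+ x. \<integral>\<^sup>+ y. ennreal (norm (f (x(i := y)))) \<partial>?N i \<partial>PiM I ?N)"
    proof -
      have mm': "(\<lambda>z. ennreal (norm (case z of (x, y) \<Rightarrow> f (x(i := y))))) \<in> borel_measurable (PiM I ?N \<Otimes>\<^sub>M ?N i)"
        using measurable_compose[OF mm, of "\<lambda>v. ennreal (norm v)" borel] by simp
      have sf: "sigma_finite_measure (?N i)" by (rule sigma_finite_measures)
      show ?thesis using sigma_finite_measure.nn_integral_fst[OF sf mm'] by simp
    qed
    also have "\<dots> = (\<integral>\<^sup>+ x. ennreal (norm (f x)) \<partial>PiM (insert i I) ?N)"
      by (rule product_nn_integral_insert[symmetric]) (use I fm in auto)
    also have "\<dots> < \<infinity>" using fN by (simp add: integrable_iff_bounded)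
    finally show "(\<integral>\<^sup>+ z. ennreal (norm (case z of (x, y) \<Rightarrow> f (x(i := y)))) \<partial>(PiM I ?N \<Otimes>\<^sub>M ?N i)) < \<infinity>" .
  qed
  then have int2: "integrable (PiM I ?N \<Otimes>\<^sub>M ?N i) (case_prod (\<lambda>x y. f (x(i := y))))" by simp
  have "integral\<^sup>L (PiM (insert i I) ?N) f = (\<integral>x. (\<integral>y. f (x(i:=y)) \<partial>?N i) \<partial>PiM I ?N)"
    by (rule product_integral_insert[OF I fN])
  also have "\<dots> = (\<integral>y. (\<integral>x. f (x(i:=y)) \<partial>PiM I ?N) \<partial>?N i)"
    by (rule P.Fubini_integral[OF int2, symmetric])
  finally show ?thesis unfolding PN PN2 Ni .
qed

definition LI :: "nat \<Rightarrow> (nat \<Rightarrow> real set) \<Rightarrow> (nat \<Rightarrow> real measure) \<Rightarrow> ((nat \<Rightarrow> real) \<Rightarrow> real) \<Rightarrow> real" where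
  "LI n J M F = set_lebesgue_integral (PiM {..n} M) (bx n J) F"

definition RI :: "nat \<Rightarrow> (nat \<Rightarrow> real set) \<Rightarrow> (nat \<Rightarrow> real measure) \<Rightarrow> nat \<Rightarrow> ((nat \<Rightarrow> real) \<Rightarrow> real) \<Rightarrow> real \<Rightarrow> real" where
  "RI n J M j F t = (\<integral>u. indicator (bx n J) (u(j:=t)) * F (u(j:=t)) \<partial>PiM ({..n} - {j}) M)"

lemma integral_sum_list:
  fixes f :: "'b \<Rightarrow> 'a \<Rightarrow> real"
  assumes "\<forall>c\<in>set cs. integrable M (f c)"
  shows "integral\<^sup>L M (\<lambda>x. sum_list (map (\<lambda>c. f c x) cs)) = sum_list (map (\<lambda>c. integral\<^sup>L M (f c)) cs)"
    and "integrable M (\<lambda>x. sum_list (map (\<lambda>c. f c x) cs))"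
  using assms by (induction cs) auto

lemma prod_indicator_eq:
  fixes A :: "nat \<Rightarrow> real set"
  assumes fin: "finite S"
  shows "(\<Prod>i\<in>S. indicator (A i) (u i) :: real) = (if \<forall>i\<in>S. u i \<in> A i then 1 else 0)"
proof (cases "\<forall>i\<in>S. u i \<in> A i")
  case True then show ?thesis by (simp add: indicator_def)
next
  case False
  then obtain i where "i \<in> S" "u i \<notin> A i" by blast
  then show ?thesis
  proof -
    note True = fin
    have "(\<Prod>i\<in>S. indicator (A i) (u i) :: real) = 0"
      by (rule prod_zero[OF True]) (use \<open>i \<in> S\<close> \<open>u i \<notin> A i\<close> in \<open>auto intro!: bexI[of _ i]\<close>)
    then show ?thesis using False by simp
  qed
qed

lemma ind_bx:
  assumes "u \<in> extensional {..n}"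
  shows "indicator (bx n J) u = (\<Prod>i\<le>n. indicator (J i) (u i) :: real)"
proof -
  have "u \<in> bx n J \<longleftrightarrow> (\<forall>i\<in>{..n}. u i \<in> J i)" using assms unfolding bx_def by (auto simp: PiE_iff)
  then show ?thesis by (simp add: prod_indicator_eq indicator_def)
qed

lemma meas_comp_ind:
  fixes c :: "real \<Rightarrow> real"
  assumes "sets (M i) = sets borel" "compact (J i)" "continuous_on (J i) c" "i \<in> I"
  shows "(\<lambda>u. indicator (J i) (u i) * c (u i)) \<in> borel_measurable (PiM I M)"
proof -
  have "(\<lambda>t. indicator (J i) t *\<^sub>R c t) \<in> borel_measurable borel"
    using borel_measurable_continuous_on_indicator[of "J i" c] assms(2,3) compact_imp_closed[OF assms(2)] by auto
  then have m: "(\<lambda>t. indicator (J i) t * c t) \<in> borel_measurable (M i)"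
    by (simp add: measurable_cong_sets[OF assms(1) refl])
  show ?thesis using measurable_compose[OF measurable_component_singleton[OF assms(4), of M] m] by (simp add: comp_def)
qed

context
  fixes n :: nat and J :: "nat \<Rightarrow> real set"
  assumes Jc: "\<And>i. i \<le> n \<Longrightarrow> compact (J i)"
begin

lemma meas_tens:
  assumes M: "\<And>i. i \<le> n \<Longrightarrow> sets (M i) = sets borel" and cs: "okT n J cs"
  shows "(\<lambda>u. indicator (bx n J) u * tens n cs u) \<in> borel_measurable (PiM {..n} M)"
proof -
  have eq: "indicator (bx n J) u * tens n cs u = sum_list (map (\<lambda>c. \<Prod>i\<le>n. indicator (J i) (u i) * c i (u i)) cs)"
    if "u \<in> space (PiM {..n} M)" for u
  proof -
    have "u \<in> extensional {..n}" using that by (simp add: space_PiM PiE_def)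
    then show ?thesis unfolding ind_bx[OF \<open>u \<in> extensional {..n}\<close>] tens_def
      by (induction cs) (simp_all add: prod.distrib algebra_simps)
  qed
  have "(\<lambda>u. sum_list (map (\<lambda>c. \<Prod>i\<le>n. indicator (J i) (u i) * c i (u i)) cs)) \<in> borel_measurable (PiM {..n} M)"
    using cs
  proof (induction cs)
    case Nil then show ?case by simp
  next
    case (Cons c cs)
    have "(\<lambda>u. \<Prod>i\<le>n. indicator (J i) (u i) * c i (u i)) \<in> borel_measurable (PiM {..n} M)"
      apply (rule borel_measurable_prod)
      apply (rule meas_comp_ind)
      using Cons.prems M Jc by (auto simp: okT_def)
    moreover have "okT n J cs" using Cons.prems by (simp add: okT_def)
    ultimately show ?case using Cons.IH by simp
  qed
  then show ?thesis using eq by (subst measurable_cong) auto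
qed

lemma meas_cont:
  fixes F :: "(nat \<Rightarrow> real) \<Rightarrow> real"
  assumes M: "\<And>i. i \<le> n \<Longrightarrow> sets (M i) = sets borel" and F: "continuous_on (bx n J) F"
  shows "(\<lambda>u. indicator (bx n J) u * F u) \<in> borel_measurable (PiM {..n} M)"
proof -
  have "\<forall>m::nat. \<exists>cs. okT n J cs \<and> (\<forall>u\<in>bx n J. \<bar>F u - tens n cs u\<bar> < 1 / Suc m)"
  proof
    fix m :: nat
    have "0 < 1 / real (Suc m)" by simp
    from SW_tens[OF Jc F this] show "\<exists>cs. okT n J cs \<and> (\<forall>u\<in>bx n J. \<bar>F u - tens n cs u\<bar> < 1 / Suc m)" by metis
  qed
  then obtain CS where CS: "\<And>m. okT n J (CS m)" "\<And>m u. u \<in> bx n J \<Longrightarrow> \<bar>F u - tens n (CS m) u\<bar> < 1 / Suc m"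
    by metis
  show ?thesis
  proof (rule borel_measurable_LIMSEQ_real[where u="\<lambda>m u. indicator (bx n J) u * tens n (CS m) u"])
    fix u assume "u \<in> space (PiM {..n} M)"
    show "(\<lambda>m. indicator (bx n J) u * tens n (CS m) u) \<longlonglongrightarrow> indicator (bx n J) u * F u"
    proof (cases "u \<in> bx n J")
      case True
      have "(\<lambda>m. tens n (CS m) u) \<longlonglongrightarrow> F u"
      proof (rule LIMSEQ_I)
        fix r :: real assume r: "0 < r"
        obtain N :: nat where N: "1 / Suc N < r" using r by (metis nat_approx_posE)
        show "\<exists>no. \<forall>m\<ge>no. norm (tens n (CS m) u - F u) < r"
        proof (intro exI allI impI)
          fix m assume "N \<le> m"
          then have "1 / real (Suc m) \<le> 1 / Suc N" by (simp add: frac_le)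
          then show "norm (tens n (CS m) u - F u) < r" using CS(2)[OF True, of m] N by (simp add: abs_minus_commute)
        qed
      qed
      then show ?thesis using True by simp
    qed simp
  qed (rule meas_tens[OF M CS(1)])
qed

lemma bound_cont:
  fixes F :: "(nat \<Rightarrow> real) \<Rightarrow> real"
  assumes "continuous_on (bx n J) F"
  obtains B where "B > 0" "\<And>u. u \<in> bx n J \<Longrightarrow> \<bar>F u\<bar> \<le> B"
  using cont_bound_pos[OF compact_bx[of n J, OF Jc] assms] by blast

lemma integrable_cont:
  fixes F :: "(nat \<Rightarrow> real) \<Rightarrow> real"
  assumes M: "\<And>i. i \<le> n \<Longrightarrow> finite_measure (M i) \<and> sets (M i) = sets borel" and F: "continuous_on (bx n J) F"
  shows "integrable (PiM {..n} M) (\<lambda>u. indicator (bx n J) u * F u)"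
proof -
  interpret finite_measure "PiM {..n} M" using finite_PiM[of "{..n}" M] M by auto
  obtain B where B: "B > 0" "\<And>u. u \<in> bx n J \<Longrightarrow> \<bar>F u\<bar> \<le> B" using bound_cont[OF F] by blast
  have "AE u in PiM {..n} M. norm (indicator (bx n J) u * F u) \<le> B"
    using B by (auto simp: indicator_def)
  moreover have "(\<lambda>u. indicator (bx n J) u * F u) \<in> borel_measurable (PiM {..n} M)"
    using meas_cont M F by blast
  ultimately show ?thesis by (rule integrable_const_bound)
qed

lemma meas_upd:
  assumes j: "j \<le> n"
  shows "(\<lambda>u. u(j:=t)) \<in> measurable (PiM ({..n} - {j}) M) (PiM {..n} (M(j := borel)))"
proof -
  have ins: "insert j ({..n} - {j}) = {..n}" using j by auto
  have P: "PiM ({..n} - {j}) (M(j := borel)) = PiM ({..n} - {j}) M" by (rule PiM_cong) auto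
  have "(\<lambda>u. (u, t)) \<in> measurable (PiM ({..n} - {j}) (M(j := borel))) (PiM ({..n} - {j}) (M(j := borel)) \<Otimes>\<^sub>M (M(j := borel)) j)"
    by (rule measurable_Pair) auto
  from measurable_comp[OF this measurable_add_dim[where I="{..n} - {j}" and M="M(j := borel)" and i=j]]
  show ?thesis unfolding ins P by (simp add: comp_def)
qed

lemma RI_integrable:
  fixes F :: "(nat \<Rightarrow> real) \<Rightarrow> real"
  assumes j: "j \<le> n" and M: "\<And>i. i \<le> n \<Longrightarrow> i \<noteq> j \<Longrightarrow> finite_measure (M i) \<and> sets (M i) = sets borel"
    and F: "continuous_on (bx n J) F"
  shows "integrable (PiM ({..n} - {j}) M) (\<lambda>u. indicator (bx n J) (u(j:=t)) * F (u(j:=t)))"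
proof -
  interpret finite_measure "PiM ({..n} - {j}) M" using finite_PiM[of "{..n} - {j}" M] M by auto
  obtain B where B: "B > 0" "\<And>u. u \<in> bx n J \<Longrightarrow> \<bar>F u\<bar> \<le> B" using bound_cont[OF F] by blast
  have "AE u in PiM ({..n} - {j}) M. norm (indicator (bx n J) (u(j:=t)) * F (u(j:=t))) \<le> B"
    using B by (auto simp: indicator_def)
  moreover have "(\<lambda>u. indicator (bx n J) u * F u) \<in> borel_measurable (PiM {..n} (M(j := borel)))"
    using meas_cont M F by auto
  then have "(\<lambda>u. indicator (bx n J) (u(j:=t)) * F (u(j:=t))) \<in> borel_measurable (PiM ({..n} - {j}) M)"
    using measurable_comp[OF meas_upd[OF j]] by (simp add: comp_def)
  ultimately show ?thesis by (rule integrable_const_bound)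
qed

lemma ind_tens_eq:
  assumes "u \<in> extensional {..n}"
  shows "indicator (bx n J) u * tens n cs u = sum_list (map (\<lambda>c. \<Prod>i\<le>n. indicator (J i) (u i) * c i (u i)) cs)"
  unfolding ind_bx[OF assms] tens_def
  by (induction cs) (simp_all add: prod.distrib algebra_simps)

lemma sint_integrable_ind:
  fixes c :: "real \<Rightarrow> real"
  assumes "finite_measure N" "sets N = sets borel" "compact K" "continuous_on K c"
  shows "integrable N (\<lambda>t. indicator K t * c t)"
    and "integral\<^sup>L N (\<lambda>t. indicator K t * c t) = set_lebesgue_integral N K c"
  using cont_set_integrable[OF assms] unfolding set_integrable_def set_lebesgue_integral_def by simp_all

lemma LI_tens:
  assumes M: "\<And>i. i \<le> n \<Longrightarrow> finite_measure (M i) \<and> sets (M i) = sets borel" and cs: "okT n J cs"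
  shows "LI n J M (tens n cs) = sum_list (map (\<lambda>c. \<Prod>i\<le>n. set_lebesgue_integral (M i) (J i) (c i)) cs)"
proof -
  have "LI n J M (tens n cs) = (\<integral>u. sum_list (map (\<lambda>c. \<Prod>i\<le>n. indicator (J i) (u i) * c i (u i)) cs) \<partial>PiM {..n} M)"
    unfolding LI_def set_lebesgue_integral_def
    by (rule Bochner_Integration.integral_cong) (auto simp: space_PiM PiE_def ind_tens_eq)
  also have "\<dots> = sum_list (map (\<lambda>c. \<integral>u. (\<Prod>i\<le>n. indicator (J i) (u i) * c i (u i)) \<partial>PiM {..n} M) cs)"
  proof (rule integral_sum_list(1), intro ballI)
    fix c assume "c \<in> set cs"
    then have "\<forall>i\<le>n. continuous_on (J i) (c i)" using cs by (simp add: okT_def)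
    then show "integrable (PiM {..n} M) (\<lambda>u. \<Prod>i\<le>n. indicator (J i) (u i) * c i (u i))"
      using M Jc by (intro PiM_prod_int(2)[where f="\<lambda>i t. indicator (J i) t * c i t", simplified]) (auto intro: sint_integrable_ind)
  qed
  also have "\<dots> = sum_list (map (\<lambda>c. \<Prod>i\<le>n. set_lebesgue_integral (M i) (J i) (c i)) cs)"
  proof (rule arg_cong[where f=sum_list], rule map_cong[OF refl])
    fix c assume "c \<in> set cs"
    then have ci: "\<forall>i\<le>n. continuous_on (J i) (c i)" using cs by (simp add: okT_def)
    have "(\<integral>u. (\<Prod>i\<le>n. indicator (J i) (u i) * c i (u i)) \<partial>PiM {..n} M) = (\<Prod>i\<le>n. integral\<^sup>L (M i) (\<lambda>t. indicator (J i) t * c i t))"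
      using M Jc ci by (intro PiM_prod_int(1)[where f="\<lambda>i t. indicator (J i) t * c i t", simplified]) (auto intro: sint_integrable_ind)
    also have "\<dots> = (\<Prod>i\<le>n. set_lebesgue_integral (M i) (J i) (c i))"
      using M Jc ci by (intro prod.cong refl sint_integrable_ind(2)) auto
    finally show "(\<integral>u. (\<Prod>i\<le>n. indicator (J i) (u i) * c i (u i)) \<partial>PiM {..n} M) = (\<Prod>i\<le>n. set_lebesgue_integral (M i) (J i) (c i))" .
  qed
  finally show ?thesis .
qed

lemma RI_tens:
  assumes j: "j \<le> n" and t: "t \<in> J j"
    and M: "\<And>i. i \<le> n \<Longrightarrow> i \<noteq> j \<Longrightarrow> finite_measure (M i) \<and> sets (M i) = sets borel" and cs: "okT n J cs"
  shows "RI n J M j (tens n cs) t = sum_list (map (\<lambda>c. c j t * (\<Prod>i\<in>{..n}-{j}. set_lebesgue_integral (M i) (J i) (c i))) cs)"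
proof -
  have eq: "indicator (bx n J) (u(j:=t)) * tens n cs (u(j:=t))
      = sum_list (map (\<lambda>c. c j t * (\<Prod>i\<in>{..n}-{j}. indicator (J i) (u i) * c i (u i))) cs)"
    if u: "u \<in> space (PiM ({..n} - {j}) M)" for u
  proof -
    have "u(j:=t) \<in> extensional {..n}" using u j by (auto simp: space_PiM PiE_def extensional_def)
    then have "indicator (bx n J) (u(j:=t)) * tens n cs (u(j:=t))
       = sum_list (map (\<lambda>c. \<Prod>i\<le>n. indicator (J i) ((u(j:=t)) i) * c i ((u(j:=t)) i)) cs)"
      by (rule ind_tens_eq)
    also have "\<dots> = sum_list (map (\<lambda>c. c j t * (\<Prod>i\<in>{..n}-{j}. indicator (J i) (u i) * c i (u i))) cs)"
    proof (rule arg_cong[where f=sum_list], rule map_cong[OF refl])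
      fix c
      have "(\<Prod>i\<le>n. indicator (J i) ((u(j:=t)) i) * c i ((u(j:=t)) i))
          = (indicator (J j) t * c j t) * (\<Prod>i\<in>{..n}-{j}. indicator (J i) ((u(j:=t)) i) * c i ((u(j:=t)) i))"
        using j by (subst prod.remove[of _ j]) auto
      also have "(\<Prod>i\<in>{..n}-{j}. indicator (J i) ((u(j:=t)) i) * c i ((u(j:=t)) i)) = (\<Prod>i\<in>{..n}-{j}. indicator (J i) (u i) * c i (u i))"
        by (rule prod.cong) auto
      finally show "(\<Prod>i\<le>n. indicator (J i) ((u(j:=t)) i) * c i ((u(j:=t)) i)) = c j t * (\<Prod>i\<in>{..n}-{j}. indicator (J i) (u i) * c i (u i))"
        using t by simp
    qed
    finally show ?thesis .
  qed
  have ints: "integrable (PiM ({..n}-{j}) M) (\<lambda>u. \<Prod>i\<in>{..n}-{j}. indicator (J i) (u i) * c i (u i))"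
    and intv: "(\<integral>u. (\<Prod>i\<in>{..n}-{j}. indicator (J i) (u i) * c i (u i)) \<partial>PiM ({..n}-{j}) M) = (\<Prod>i\<in>{..n}-{j}. set_lebesgue_integral (M i) (J i) (c i))"
    if "c \<in> set cs" for c
  proof -
    have ci: "\<forall>i\<le>n. continuous_on (J i) (c i)" using cs that by (simp add: okT_def)
    show "integrable (PiM ({..n}-{j}) M) (\<lambda>u. \<Prod>i\<in>{..n}-{j}. indicator (J i) (u i) * c i (u i))"
      using M Jc ci by (intro PiM_prod_int(2)[where f="\<lambda>i t. indicator (J i) t * c i t", simplified]) (auto intro: sint_integrable_ind)
    have "(\<integral>u. (\<Prod>i\<in>{..n}-{j}. indicator (J i) (u i) * c i (u i)) \<partial>PiM ({..n}-{j}) M) = (\<Prod>i\<in>{..n}-{j}. integral\<^sup>L (M i) (\<lambda>t. indicator (J i) t * c i t))"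
      using M Jc ci by (intro PiM_prod_int(1)[where f="\<lambda>i t. indicator (J i) t * c i t", simplified]) (auto intro: sint_integrable_ind)
    also have "\<dots> = (\<Prod>i\<in>{..n}-{j}. set_lebesgue_integral (M i) (J i) (c i))"
      using M Jc ci by (intro prod.cong refl sint_integrable_ind(2)) auto
    finally show "(\<integral>u. (\<Prod>i\<in>{..n}-{j}. indicator (J i) (u i) * c i (u i)) \<partial>PiM ({..n}-{j}) M) = (\<Prod>i\<in>{..n}-{j}. set_lebesgue_integral (M i) (J i) (c i))" .
  qed
  have "RI n J M j (tens n cs) t = (\<integral>u. sum_list (map (\<lambda>c. c j t * (\<Prod>i\<in>{..n}-{j}. indicator (J i) (u i) * c i (u i))) cs) \<partial>PiM ({..n}-{j}) M)"
    unfolding RI_def by (rule Bochner_Integration.integral_cong) (auto simp: eq)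
  also have "\<dots> = sum_list (map (\<lambda>c. \<integral>u. c j t * (\<Prod>i\<in>{..n}-{j}. indicator (J i) (u i) * c i (u i)) \<partial>PiM ({..n}-{j}) M) cs)"
    by (rule integral_sum_list(1)) (auto intro: ints)
  also have "\<dots> = sum_list (map (\<lambda>c. c j t * (\<Prod>i\<in>{..n}-{j}. set_lebesgue_integral (M i) (J i) (c i))) cs)"
    by (rule arg_cong[where f=sum_list], rule map_cong[OF refl]) (simp add: intv)
  finally show ?thesis .
qed

end

lemma int_abs_le:
  fixes f g :: "'a \<Rightarrow> real"
  assumes "integrable M f" "integrable M g" "\<And>x. x \<in> space M \<Longrightarrow> \<bar>f x\<bar> \<le> g x"
  shows "\<bar>integral\<^sup>L M f\<bar> \<le> integral\<^sup>L M g"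
proof -
  have "\<bar>integral\<^sup>L M f\<bar> \<le> integral\<^sup>L M (\<lambda>x. \<bar>f x\<bar>)"
    using integral_norm_bound[of M f] by simp
  also have "\<dots> \<le> integral\<^sup>L M g"
    by (rule integral_mono) (use assms in auto)
  finally show ?thesis .
qed

lemma sum_list_cont:
  fixes S :: "real set" and K :: "(nat \<Rightarrow> real \<Rightarrow> real) \<Rightarrow> real" and cs :: "(nat \<Rightarrow> real \<Rightarrow> real) list"
  assumes "\<forall>c\<in>set cs. continuous_on S (c j)"
  shows "continuous_on S (\<lambda>t. sum_list (map (\<lambda>c. c j t * K c) cs))"
  using assms
proof (induction cs)
  case (Cons a cs)
  then have "continuous_on S (a j)" "continuous_on S (\<lambda>t. sum_list (map (\<lambda>c. c j t * K c) cs))" by auto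
  then have "continuous_on S (\<lambda>t. a j t * K a + sum_list (map (\<lambda>c. c j t * K c) cs))"
    by (intro continuous_on_add continuous_on_mult_right)
  then show ?case by simp
qed simp

context
  fixes n :: nat and J :: "nat \<Rightarrow> real set"
  assumes Jint: "\<And>i. i \<le> n \<Longrightarrow> \<exists>a b. a \<le> b \<and> J i = {a..b}"
begin

lemma Jc: "i \<le> n \<Longrightarrow> compact (J i)" using Jint by fastforce
lemma Jconv: "i \<le> n \<Longrightarrow> convex (J i)" using Jint by fastforce
lemma Jne: "i \<le> n \<Longrightarrow> J i \<noteq> {}" using Jint by fastforce

lemma upd_bx: "u \<in> bx n J \<Longrightarrow> j \<le> n \<Longrightarrow> t \<in> J j \<Longrightarrow> u(j:=t) \<in> bx n J"
  unfolding bx_def by (auto simp: PiE_iff extensional_def)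

lemma ind_upd:
  assumes "j \<le> n" "t \<in> J j" "t' \<in> J j"
  shows "indicator (bx n J) (u(j:=t)) = (indicator (bx n J) (u(j:=t')) :: real)"
  using assms unfolding bx_def by (auto simp: indicator_def PiE_iff extensional_def)

lemma RI_diff_bound:
  fixes F G :: "(nat \<Rightarrow> real) \<Rightarrow> real"
  assumes j: "j \<le> n" and M: "\<And>i. i \<le> n \<Longrightarrow> i \<noteq> j \<Longrightarrow> prob_space (M i) \<and> sets (M i) = sets borel"
    and F: "continuous_on (bx n J) F" and G: "continuous_on (bx n J) G"
    and e: "0 \<le> e" and FG: "\<And>u. u \<in> bx n J \<Longrightarrow> \<bar>F u - G u\<bar> \<le> e"
  shows "\<bar>RI n J M j F t - RI n J M j G t\<bar> \<le> e"
proof -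
  have Mf: "\<And>i. i \<le> n \<Longrightarrow> i \<noteq> j \<Longrightarrow> finite_measure (M i) \<and> sets (M i) = sets borel"
    using M prob_space.finite_measure by blast
  interpret P: prob_space "PiM ({..n} - {j}) M" by (rule prob_space_PiM) (use M in auto)
  have iF: "integrable (PiM ({..n} - {j}) M) (\<lambda>u. indicator (bx n J) (u(j:=t)) * F (u(j:=t)))"
    by (rule RI_integrable[OF Jc j Mf F]) auto
  have iG: "integrable (PiM ({..n} - {j}) M) (\<lambda>u. indicator (bx n J) (u(j:=t)) * G (u(j:=t)))"
    by (rule RI_integrable[OF Jc j Mf G]) auto
  have "RI n J M j F t - RI n J M j G t = (\<integral>u. indicator (bx n J) (u(j:=t)) * F (u(j:=t)) - indicator (bx n J) (u(j:=t)) * G (u(j:=t)) \<partial>PiM ({..n} - {j}) M)"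
    unfolding RI_def using Bochner_Integration.integral_diff[OF iF iG] by simp
  also have "\<bar>\<dots>\<bar> \<le> (\<integral>u. e \<partial>PiM ({..n} - {j}) M)"
  proof -
    have "\<bar>\<integral>u. indicator (bx n J) (u(j:=t)) * F (u(j:=t)) - indicator (bx n J) (u(j:=t)) * G (u(j:=t)) \<partial>PiM ({..n} - {j}) M\<bar> \<le> (\<integral>u. e \<partial>PiM ({..n} - {j}) M)"
    proof (rule int_abs_le)
      show "integrable (PiM ({..n} - {j}) M) (\<lambda>u. indicator (bx n J) (u(j:=t)) * F (u(j:=t)) - indicator (bx n J) (u(j:=t)) * G (u(j:=t)))"
        using iF iG by simp
      show "integrable (PiM ({..n} - {j}) M) (\<lambda>u. e)" by simp
      fix u
      show "\<bar>indicator (bx n J) (u(j:=t)) * F (u(j:=t)) - indicator (bx n J) (u(j:=t)) * G (u(j:=t))\<bar> \<le> e"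
        using FG[of "u(j:=t)"] e by (cases "u(j:=t) \<in> bx n J") auto
    qed
    then show ?thesis by simp
  qed
  also have "\<dots> = e" by (simp add: P.prob_space)
  finally show ?thesis .
qed

lemma RI_cont:
  fixes F :: "(nat \<Rightarrow> real) \<Rightarrow> real"
  assumes j: "j \<le> n" and M: "\<And>i. i \<le> n \<Longrightarrow> i \<noteq> j \<Longrightarrow> prob_space (M i) \<and> sets (M i) = sets borel"
    and F: "continuous_on (bx n J) F"
  shows "continuous_on (J j) (RI n J M j F)"
proof -
  have Mf: "\<And>i. i \<le> n \<Longrightarrow> i \<noteq> j \<Longrightarrow> finite_measure (M i) \<and> sets (M i) = sets borel"
    using M prob_space.finite_measure by blast
  have "\<forall>m::nat. \<exists>cs. okT n J cs \<and> (\<forall>u\<in>bx n J. \<bar>F u - tens n cs u\<bar> < 1 / Suc m)"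
  proof
    fix m :: nat
    have "0 < 1 / real (Suc m)" by simp
    from SW_tens[OF Jc F this] show "\<exists>cs. okT n J cs \<and> (\<forall>u\<in>bx n J. \<bar>F u - tens n cs u\<bar> < 1 / Suc m)" by metis
  qed
  then obtain CS where CS: "\<And>m. okT n J (CS m)" "\<And>m u. u \<in> bx n J \<Longrightarrow> \<bar>F u - tens n (CS m) u\<bar> < 1 / Suc m"
    by metis
  have contm: "continuous_on (J j) (RI n J M j (tens n (CS m)))" for m
  proof -
    have "continuous_on (J j) (\<lambda>t. sum_list (map (\<lambda>c. c j t * (\<Prod>i\<in>{..n}-{j}. set_lebesgue_integral (M i) (J i) (c i))) (CS m)))"
      by (rule sum_list_cont) (use CS(1)[of m] j in \<open>auto simp: okT_def\<close>)
    then show ?thesis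
      by (rule continuous_on_cong[THEN iffD1, rotated 2]) (use RI_tens[OF Jc j _ Mf CS(1)] in auto)
  qed
  have unif: "uniform_limit (J j) (\<lambda>m. RI n J M j (tens n (CS m))) (RI n J M j F) sequentially"
    unfolding uniform_limit_iff
  proof (intro allI impI)
    fix e :: real assume e: "0 < e"
    obtain N :: nat where N: "1 / Suc N < e" using e by (metis nat_approx_posE)
    show "\<forall>\<^sub>F m in sequentially. \<forall>t\<in>J j. dist (RI n J M j (tens n (CS m)) t) (RI n J M j F t) < e"
      unfolding eventually_sequentially
    proof (intro exI allI impI ballI)
      fix m t assume m: "N \<le> m"
      have "\<bar>RI n J M j F t - RI n J M j (tens n (CS m)) t\<bar> \<le> 1 / Suc m"
        by (rule RI_diff_bound[OF j M F cont_tens[OF CS(1)]]) (use CS(2) in \<open>auto simp: less_imp_le\<close>)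
      also have "\<dots> \<le> 1 / Suc N" using m by (simp add: frac_le)
      finally show "dist (RI n J M j (tens n (CS m)) t) (RI n J M j F t) < e"
        using N by (simp add: dist_real_def abs_minus_commute)
    qed
  qed
  show ?thesis by (rule uniform_limit_theorem[OF _ unif]) (auto simp: contm)
qed

lemma LI_decomp:
  fixes F :: "(nat \<Rightarrow> real) \<Rightarrow> real"
  assumes j: "j \<le> n" and M: "\<And>i. i \<le> n \<Longrightarrow> finite_measure (M i) \<and> sets (M i) = sets borel"
    and F: "continuous_on (bx n J) F"
  shows "LI n J M F = set_lebesgue_integral (M j) (J j) (RI n J M j F)"
proof -
  have ins: "insert j ({..n} - {j}) = {..n}" using j by auto
  have int: "integrable (PiM (insert j ({..n} - {j})) M) (\<lambda>u. indicator (bx n J) u * F u)"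
    unfolding ins by (rule integrable_cont[OF Jc M F]) auto
  have "LI n J M F = integral\<^sup>L (PiM (insert j ({..n} - {j})) M) (\<lambda>u. indicator (bx n J) u * F u)"
    unfolding LI_def set_lebesgue_integral_def ins by simp
  also have "\<dots> = (\<integral>y. (\<integral>x. indicator (bx n J) (x(j:=y)) * F (x(j:=y)) \<partial>PiM ({..n} - {j}) M) \<partial>M j)"
    by (rule prod_int_rev[OF _ _ _ int]) (use M ins in auto)
  also have "\<dots> = set_lebesgue_integral (M j) (J j) (RI n J M j F)"
    unfolding set_lebesgue_integral_def RI_def
  proof (rule Bochner_Integration.integral_cong[OF refl])
    fix y
    show "(\<integral>x. indicator (bx n J) (x(j:=y)) * F (x(j:=y)) \<partial>PiM ({..n} - {j}) M) =
        indicator (J j) y *\<^sub>R (\<integral>x. indicator (bx n J) (x(j:=y)) * F (x(j:=y)) \<partial>PiM ({..n} - {j}) M)"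
    proof (cases "y \<in> J j")
      case False
      then have "indicator (bx n J) (x(j:=y)) = (0::real)" for x
        using j unfolding bx_def by (auto simp: indicator_def PiE_iff)
      then show ?thesis by simp
    qed simp
  qed
  finally show ?thesis .
qed

end

context
  fixes n :: nat and J :: "nat \<Rightarrow> real set"
  assumes Jint: "\<And>i. i \<le> n \<Longrightarrow> \<exists>a b. a \<le> b \<and> J i = {a..b}"
begin

lemma Jc7: "i \<le> n \<Longrightarrow> compact (J i)" by (rule Jc[OF Jint])

lemma prod_split_upd:
  fixes c :: "nat \<Rightarrow> real \<Rightarrow> real"
  assumes j: "j \<le> n"
  shows "(\<Prod>i\<le>n. c i ((u(j:=\<tau>)) i)) = c j \<tau> * (\<Prod>i\<in>{..n}-{j}. c i (u i))"
proof -
  have "(\<Prod>i\<le>n. c i ((u(j:=\<tau>)) i)) = c j \<tau> * (\<Prod>i\<in>{..n}-{j}. c i ((u(j:=\<tau>)) i))"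
    using j by (subst prod.remove[of _ j]) auto
  also have "(\<Prod>i\<in>{..n}-{j}. c i ((u(j:=\<tau>)) i)) = (\<Prod>i\<in>{..n}-{j}. c i (u i))"
    by (rule prod.cong) auto
  finally show ?thesis .
qed

lemma tens_dir_unif:
  assumes j: "j \<le> n" and cs: "okT n J cs"
  shows "\<forall>e>0. \<exists>d>0. \<forall>u\<in>bx n J. \<forall>\<tau>\<in>J j. \<bar>\<tau> - u j\<bar> < d \<longrightarrow> \<bar>tens n cs (u(j:=\<tau>)) - tens n cs u\<bar> < e"
  using cs
proof (induction cs)
  case Nil then show ?case by (auto intro: exI[of _ 1])
next
  case (Cons c cs)
  have cc: "\<forall>i\<le>n. continuous_on (J i) (c i)" and ocs: "okT n J cs" using Cons.prems by (auto simp: okT_def)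
  show ?case
  proof (intro allI impI)
    fix e :: real assume e: "0 < e"
    define R where "R u = (\<Prod>i\<in>{..n}-{j}. c i (u i))" for u
    have Rc: "continuous_on (bx n J) R"
    proof -
      have "continuous_on (bx n J) (\<lambda>u. c i (u i))" if "i \<in> {..n}-{j}" for i
        using cc that by (intro cont_coord[of J i]) (auto simp: bx_def)
      then show ?thesis unfolding R_def
        using continuous_on_prod[where f="\<lambda>i u. c i (u i)" and S="{..n}-{j}" and s="bx n J"] by simp
    qed
    obtain B where B: "B > 0" "\<And>u. u \<in> bx n J \<Longrightarrow> \<bar>R u\<bar> \<le> B"
      using bound_cont[OF Jc7 Rc] by blast
    have "uniformly_continuous_on (J j) (c j)"
      using compact_uniformly_continuous[OF _ Jc7[OF j]] cc j by blast
    then obtain d1 where d1: "d1 > 0" "\<And>x x'. x \<in> J j \<Longrightarrow> x' \<in> J j \<Longrightarrow> dist x' x < d1 \<Longrightarrow> dist (c j x') (c j x) < e / (2 * B)"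
      unfolding uniformly_continuous_on_def using e B(1) by (metis divide_pos_pos mult_pos_pos zero_less_numeral)
    obtain d2 where d2: "d2 > 0" "\<And>u \<tau>. u \<in> bx n J \<Longrightarrow> \<tau> \<in> J j \<Longrightarrow> \<bar>\<tau> - u j\<bar> < d2 \<Longrightarrow> \<bar>tens n cs (u(j:=\<tau>)) - tens n cs u\<bar> < e / 2"
      using Cons.IH[OF ocs] e by (meson half_gt_zero)
    show "\<exists>d>0. \<forall>u\<in>bx n J. \<forall>\<tau>\<in>J j. \<bar>\<tau> - u j\<bar> < d \<longrightarrow> \<bar>tens n (c # cs) (u(j:=\<tau>)) - tens n (c # cs) u\<bar> < e"
    proof (intro exI[of _ "min d1 d2"] conjI ballI impI)
      show "0 < min d1 d2" using d1 d2 by simp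
      fix u \<tau> assume u: "u \<in> bx n J" and \<tau>: "\<tau> \<in> J j" and d: "\<bar>\<tau> - u j\<bar> < min d1 d2"
      have uj: "u j \<in> J j" using u j by (auto simp: bx_def)
      have t1: "(\<Prod>i\<le>n. c i ((u(j:=\<tau>)) i)) - (\<Prod>i\<le>n. c i (u i)) = (c j \<tau> - c j (u j)) * R u"
      proof -
        have "(\<Prod>i\<le>n. c i (u i)) = (\<Prod>i\<le>n. c i ((u(j:=u j)) i))" by simp
        then show ?thesis unfolding prod_split_upd[OF j] R_def by (simp add: algebra_simps)
      qed
      have "\<bar>c j \<tau> - c j (u j)\<bar> < e / (2 * B)" using d1(2)[OF uj \<tau>] d by (simp add: dist_real_def)
      then have "\<bar>(c j \<tau> - c j (u j)) * R u\<bar> \<le> e / (2 * B) * B"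
        unfolding abs_mult using B(2)[OF u] by (intro mult_mono) auto
      also have "\<dots> = e / 2" using B(1) by simp
      finally have a: "\<bar>(\<Prod>i\<le>n. c i ((u(j:=\<tau>)) i)) - (\<Prod>i\<le>n. c i (u i))\<bar> \<le> e / 2" using t1 by simp
      have b: "\<bar>tens n cs (u(j:=\<tau>)) - tens n cs u\<bar> < e / 2" using d2(2)[OF u \<tau>] d by simp
      have "tens n (c # cs) (u(j:=\<tau>)) - tens n (c # cs) u = ((\<Prod>i\<le>n. c i ((u(j:=\<tau>)) i)) - (\<Prod>i\<le>n. c i (u i))) + (tens n cs (u(j:=\<tau>)) - tens n cs u)"
        by (simp only: tens_Cons)
      then show "\<bar>tens n (c # cs) (u(j:=\<tau>)) - tens n (c # cs) u\<bar> < e" using a b by linarith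
    qed
  qed
qed

lemma dir_unif:
  fixes F :: "(nat \<Rightarrow> real) \<Rightarrow> real"
  assumes j: "j \<le> n" and F: "continuous_on (bx n J) F" and e: "0 < e"
  obtains d where "d > 0" "\<And>u \<tau>. u \<in> bx n J \<Longrightarrow> \<tau> \<in> J j \<Longrightarrow> \<bar>\<tau> - u j\<bar> < d \<Longrightarrow> \<bar>F (u(j:=\<tau>)) - F u\<bar> < e"
proof -
  have e3: "0 < e / 3" using e by simp
  obtain cs where cs: "okT n J cs" "\<And>u. u \<in> bx n J \<Longrightarrow> \<bar>F u - tens n cs u\<bar> < e / 3"
    using SW_tens[OF Jc7 F e3] by blast
  obtain d where d: "d > 0" "\<And>u \<tau>. u \<in> bx n J \<Longrightarrow> \<tau> \<in> J j \<Longrightarrow> \<bar>\<tau> - u j\<bar> < d \<Longrightarrow> \<bar>tens n cs (u(j:=\<tau>)) - tens n cs u\<bar> < e / 3"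
    using tens_dir_unif[OF j cs(1)] e3 by meson
  show ?thesis
  proof (rule that[OF d(1)])
    fix u \<tau> assume u: "u \<in> bx n J" and \<tau>: "\<tau> \<in> J j" and dd: "\<bar>\<tau> - u j\<bar> < d"
    have "u(j:=\<tau>) \<in> bx n J" by (rule upd_bx[of n J, OF Jint u j \<tau>])
    then have "\<bar>F (u(j:=\<tau>)) - tens n cs (u(j:=\<tau>))\<bar> < e / 3" by (rule cs(2))
    moreover have "\<bar>F u - tens n cs u\<bar> < e / 3" by (rule cs(2)[OF u])
    moreover have "\<bar>tens n cs (u(j:=\<tau>)) - tens n cs u\<bar> < e / 3" by (rule d(2)[OF u \<tau> dd])
    ultimately show "\<bar>F (u(j:=\<tau>)) - F u\<bar> < e" by linarith
  qed
qed

lemma RI_deriv: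
  fixes F D :: "(nat \<Rightarrow> real) \<Rightarrow> real"
  assumes j: "j \<le> n" and M: "\<And>i. i \<le> n \<Longrightarrow> i \<noteq> j \<Longrightarrow> prob_space (M i) \<and> sets (M i) = sets borel"
    and F: "continuous_on (bx n J) F" and D: "continuous_on (bx n J) D"
    and dF: "\<And>u. u \<in> bx n J \<Longrightarrow> ((\<lambda>t. F (u(j:=t))) has_real_derivative D u) (at (u j) within J j)"
    and t0: "t0 \<in> J j"
  shows "(RI n J M j F has_real_derivative RI n J M j D t0) (at t0 within J j)"
proof -
  have Mf: "\<And>i. i \<le> n \<Longrightarrow> i \<noteq> j \<Longrightarrow> finite_measure (M i) \<and> sets (M i) = sets borel"
    using M prob_space.finite_measure by blast
  interpret P: prob_space "PiM ({..n} - {j}) M" by (rule prob_space_PiM) (use M in auto)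
  have PW: "\<bar>F (w(j:=t)) - F w - (t - w j) * D w\<bar> \<le> e2 * \<bar>t - w j\<bar>"
    if w: "w \<in> bx n J" and t: "t \<in> J j" and dd: "\<bar>t - w j\<bar> < d" and e2: "0 \<le> e2"
      and dprop: "\<And>u \<tau>. u \<in> bx n J \<Longrightarrow> \<tau> \<in> J j \<Longrightarrow> \<bar>\<tau> - u j\<bar> < d \<Longrightarrow> \<bar>D (u(j:=\<tau>)) - D u\<bar> < e2"
    for w t d e2
  proof -
    have wj: "w j \<in> J j" using w j by (auto simp: bx_def)
    let ?S = "closed_segment (w j) t"
    have SJ: "?S \<subseteq> J j" by (rule closed_segment_subset[OF wj t Jconv[of n J, OF Jint j]])
    have Sb: "\<bar>\<tau> - w j\<bar> \<le> \<bar>t - w j\<bar>" if "\<tau> \<in> ?S" for \<tau>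
      using that by (auto simp: closed_segment_eq_real_ivl split: if_splits)
    have "norm ((\<lambda>\<tau>. F (w(j:=\<tau>)) - \<tau> * D w) t - (\<lambda>\<tau>. F (w(j:=\<tau>)) - \<tau> * D w) (w j)) \<le> e2 * norm (t - w j)"
    proof (rule field_differentiable_bound[where f'="\<lambda>\<tau>. D (w(j:=\<tau>)) - D w"])
      show "convex ?S" by simp
      show "t \<in> ?S" "w j \<in> ?S" by auto
      fix \<tau> assume \<tau>: "\<tau> \<in> ?S"
      then have \<tau>J: "\<tau> \<in> J j" using SJ by auto
      have wt: "w(j:=\<tau>) \<in> bx n J" by (rule upd_bx[of n J, OF Jint w j \<tau>J])
      have "((\<lambda>t'. F ((w(j:=\<tau>))(j:=t'))) has_real_derivative D (w(j:=\<tau>))) (at ((w(j:=\<tau>)) j) within J j)"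
        by (rule dF[OF wt])
      then have "((\<lambda>t'. F (w(j:=t'))) has_real_derivative D (w(j:=\<tau>))) (at \<tau> within ?S)"
        by (simp add: has_field_derivative_subset[OF _ SJ])
      then show "((\<lambda>\<tau>. F (w(j:=\<tau>)) - \<tau> * D w) has_field_derivative D (w(j:=\<tau>)) - D w) (at \<tau> within ?S)"
        by (auto intro!: derivative_eq_intros)
      have "\<bar>D (w(j:=\<tau>)) - D w\<bar> < e2" using dprop[OF w \<tau>J] Sb[OF \<tau>] dd by linarith
      then show "norm (D (w(j:=\<tau>)) - D w) \<le> e2" by simp
    qed
    then show ?thesis by (simp add: algebra_simps)
  qed
  show ?thesis
    unfolding has_field_derivative_iff tendsto_iff
  proof (intro allI impI)
    fix e :: real assume e: "0 < e"
    have e2: "0 < e / 2" using e by simp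
    obtain d where d: "d > 0" "\<And>u \<tau>. u \<in> bx n J \<Longrightarrow> \<tau> \<in> J j \<Longrightarrow> \<bar>\<tau> - u j\<bar> < d \<Longrightarrow> \<bar>D (u(j:=\<tau>)) - D u\<bar> < e / 2"
      using dir_unif[OF j D e2] by blast
    show "\<forall>\<^sub>F t in at t0 within J j. dist ((RI n J M j F t - RI n J M j F t0) / (t - t0)) (RI n J M j D t0) < e"
      unfolding eventually_at
    proof (intro exI[of _ d] conjI ballI impI)
      show "0 < d" by (rule d(1))
      fix t assume t: "t \<in> J j" and tt: "t \<noteq> t0 \<and> dist t t0 < d"
      let ?g = "\<lambda>u. indicator (bx n J) (u(j:=t)) * F (u(j:=t)) - indicator (bx n J) (u(j:=t0)) * F (u(j:=t0))
                   - (t - t0) * (indicator (bx n J) (u(j:=t0)) * D (u(j:=t0)))"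
      have iFt: "integrable (PiM ({..n} - {j}) M) (\<lambda>u. indicator (bx n J) (u(j:=t)) * F (u(j:=t)))"
        by (rule RI_integrable[OF Jc7 j Mf F]) auto
      have iF0: "integrable (PiM ({..n} - {j}) M) (\<lambda>u. indicator (bx n J) (u(j:=t0)) * F (u(j:=t0)))"
        by (rule RI_integrable[OF Jc7 j Mf F]) auto
      have iD0: "integrable (PiM ({..n} - {j}) M) (\<lambda>u. indicator (bx n J) (u(j:=t0)) * D (u(j:=t0)))"
        by (rule RI_integrable[OF Jc7 j Mf D]) auto
      have eq: "RI n J M j F t - RI n J M j F t0 - (t - t0) * RI n J M j D t0 = integral\<^sup>L (PiM ({..n} - {j}) M) ?g"
        unfolding RI_def using iFt iF0 iD0 by simp
      have "\<bar>integral\<^sup>L (PiM ({..n} - {j}) M) ?g\<bar> \<le> (\<integral>u. e / 2 * \<bar>t - t0\<bar> \<partial>PiM ({..n} - {j}) M)"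
      proof (rule int_abs_le)
        show "integrable (PiM ({..n} - {j}) M) ?g" using iFt iF0 iD0 by simp
        show "integrable (PiM ({..n} - {j}) M) (\<lambda>u. e / 2 * \<bar>t - t0\<bar>)" by simp
        fix u
        have ind: "indicator (bx n J) (u(j:=t)) = (indicator (bx n J) (u(j:=t0)) :: real)"
          by (rule ind_upd[of n J, OF Jint j t t0])
        show "\<bar>?g u\<bar> \<le> e / 2 * \<bar>t - t0\<bar>"
        proof (cases "u(j:=t0) \<in> bx n J")
          case True
          have "\<bar>F ((u(j:=t0))(j:=t)) - F (u(j:=t0)) - (t - (u(j:=t0)) j) * D (u(j:=t0))\<bar> \<le> e / 2 * \<bar>t - (u(j:=t0)) j\<bar>"
            by (rule PW[OF True t _ _ d(2)]) (use tt e in \<open>auto simp: dist_real_def\<close>)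
          then show ?thesis using True ind by (simp add: algebra_simps)
        next
          case False
          then show ?thesis using ind e by simp
        qed
      qed
      then have "\<bar>RI n J M j F t - RI n J M j F t0 - (t - t0) * RI n J M j D t0\<bar> \<le> e / 2 * \<bar>t - t0\<bar>"
        unfolding eq by (simp add: P.prob_space)
      moreover have "(RI n J M j F t - RI n J M j F t0) / (t - t0) - RI n J M j D t0
          = (RI n J M j F t - RI n J M j F t0 - (t - t0) * RI n J M j D t0) / (t - t0)"
        using tt by (simp add: field_simps)
      ultimately have "\<bar>(RI n J M j F t - RI n J M j F t0) / (t - t0) - RI n J M j D t0\<bar> \<le> e / 2"
        using tt by (simp add: abs_divide divide_le_eq)
      then show "dist ((RI n J M j F t - RI n J M j F t0) / (t - t0)) (RI n J M j D t0) < e"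
        using e by (simp add: dist_real_def)
    qed
  qed
qed

lemma tens_unif:
  fixes Mh :: "'a \<Rightarrow> nat \<Rightarrow> real measure"
  assumes j: "j \<le> n" and cs: "okT n J cs"
    and conv: "\<And>c i. c \<in> set cs \<Longrightarrow> i \<le> n \<Longrightarrow> i \<noteq> j \<Longrightarrow>
        ((\<lambda>h. set_lebesgue_integral (Mh h i) (J i) (c i)) \<longlongrightarrow> set_lebesgue_integral (Mz i) (J i) (c i)) Fl"
  shows "\<forall>e>0. eventually (\<lambda>h. \<forall>t\<in>J j.
     \<bar>sum_list (map (\<lambda>c. c j t * (\<Prod>i\<in>{..n}-{j}. set_lebesgue_integral (Mh h i) (J i) (c i))) cs)
    - sum_list (map (\<lambda>c. c j t * (\<Prod>i\<in>{..n}-{j}. set_lebesgue_integral (Mz i) (J i) (c i))) cs)\<bar> < e) Fl"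
  using cs conv
proof (induction cs)
  case Nil then show ?case by simp
next
  case (Cons c cs)
  have cc: "continuous_on (J j) (c j)" using Cons.prems(1) j by (simp add: okT_def)
  have ocs: "okT n J cs" using Cons.prems(1) by (simp add: okT_def)
  show ?case
  proof (intro allI impI)
    fix e :: real assume e: "0 < e"
    obtain B where B: "B > 0" "\<And>t. t \<in> J j \<Longrightarrow> \<bar>c j t\<bar> \<le> B" using cont_bound_pos[OF Jc7[OF j] cc] by blast
    define P where "P h = (\<Prod>i\<in>{..n}-{j}. set_lebesgue_integral (Mh h i) (J i) (c i))" for h
    define P0 where "P0 = (\<Prod>i\<in>{..n}-{j}. set_lebesgue_integral (Mz i) (J i) (c i))"
    have "(P \<longlongrightarrow> P0) Fl" unfolding P_def P0_def
      by (rule tendsto_prod) (use Cons.prems(2) in auto)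
    then have ev1: "eventually (\<lambda>h. dist (P h) P0 < e / (2 * B)) Fl"
      using e B(1) by (simp add: tendsto_iff)
    have ev2: "eventually (\<lambda>h. \<forall>t\<in>J j.
     \<bar>sum_list (map (\<lambda>c. c j t * (\<Prod>i\<in>{..n}-{j}. set_lebesgue_integral (Mh h i) (J i) (c i))) cs)
    - sum_list (map (\<lambda>c. c j t * (\<Prod>i\<in>{..n}-{j}. set_lebesgue_integral (Mz i) (J i) (c i))) cs)\<bar> < e / 2) Fl"
    proof -
      have "\<forall>e>0. eventually (\<lambda>h. \<forall>t\<in>J j.
     \<bar>sum_list (map (\<lambda>c. c j t * (\<Prod>i\<in>{..n}-{j}. set_lebesgue_integral (Mh h i) (J i) (c i))) cs)
    - sum_list (map (\<lambda>c. c j t * (\<Prod>i\<in>{..n}-{j}. set_lebesgue_integral (Mz i) (J i) (c i))) cs)\<bar> < e) Fl"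
        by (rule Cons.IH[OF ocs]) (use Cons.prems(2) in auto)
      moreover have "0 < e / 2" using e by simp
      ultimately show ?thesis by blast
    qed
    show "eventually (\<lambda>h. \<forall>t\<in>J j.
     \<bar>sum_list (map (\<lambda>c. c j t * (\<Prod>i\<in>{..n}-{j}. set_lebesgue_integral (Mh h i) (J i) (c i))) (c # cs))
    - sum_list (map (\<lambda>c. c j t * (\<Prod>i\<in>{..n}-{j}. set_lebesgue_integral (Mz i) (J i) (c i))) (c # cs))\<bar> < e) Fl"
      using ev1 ev2
    proof eventually_elim
      case (elim h)
      show ?case
      proof
        fix t assume t: "t \<in> J j"
        have "\<bar>c j t * P h - c j t * P0\<bar> = \<bar>c j t\<bar> * \<bar>P h - P0\<bar>" by (simp add: abs_mult[symmetric] algebra_simps)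
        also have "\<dots> \<le> B * (e / (2 * B))"
          using elim(1) B(2)[OF t] by (intro mult_mono) (auto simp: dist_real_def)
        also have "\<dots> = e / 2" using B(1) by simp
        finally have a: "\<bar>c j t * P h - c j t * P0\<bar> \<le> e / 2" .
        have b: "\<bar>sum_list (map (\<lambda>c. c j t * (\<Prod>i\<in>{..n}-{j}. set_lebesgue_integral (Mh h i) (J i) (c i))) cs)
    - sum_list (map (\<lambda>c. c j t * (\<Prod>i\<in>{..n}-{j}. set_lebesgue_integral (Mz i) (J i) (c i))) cs)\<bar> < e / 2"
          using elim(2) t by blast
        show "\<bar>sum_list (map (\<lambda>c. c j t * (\<Prod>i\<in>{..n}-{j}. set_lebesgue_integral (Mh h i) (J i) (c i))) (c # cs))
    - sum_list (map (\<lambda>c. c j t * (\<Prod>i\<in>{..n}-{j}. set_lebesgue_integral (Mz i) (J i) (c i))) (c # cs))\<bar> < e"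
        proof -
          define S where "S = sum_list (map (\<lambda>c. c j t * (\<Prod>i\<in>{..n}-{j}. set_lebesgue_integral (Mh h i) (J i) (c i))) cs)"
          define S0 where "S0 = sum_list (map (\<lambda>c. c j t * (\<Prod>i\<in>{..n}-{j}. set_lebesgue_integral (Mz i) (J i) (c i))) cs)"
          have eqq: "sum_list (map (\<lambda>c. c j t * (\<Prod>i\<in>{..n}-{j}. set_lebesgue_integral (Mh h i) (J i) (c i))) (c # cs))
    - sum_list (map (\<lambda>c. c j t * (\<Prod>i\<in>{..n}-{j}. set_lebesgue_integral (Mz i) (J i) (c i))) (c # cs))
            = (c j t * P h - c j t * P0) + (S - S0)" by (simp add: P_def P0_def S_def S0_def)
          have b': "\<bar>S - S0\<bar> < e / 2" using b unfolding S_def S0_def .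
          show ?thesis unfolding eqq using abs_triangle_ineq[of "c j t * P h - c j t * P0" "S - S0"] a b' by linarith
        qed
      qed
    qed
  qed
qed

lemma RI_unif:
  fixes Mh :: "'a \<Rightarrow> nat \<Rightarrow> real measure" and F :: "(nat \<Rightarrow> real) \<Rightarrow> real"
  assumes j: "j \<le> n" and F: "continuous_on (bx n J) F"
    and Mh: "eventually (\<lambda>h. \<forall>i\<le>n. i \<noteq> j \<longrightarrow> prob_space (Mh h i) \<and> sets (Mh h i) = sets borel) Fl"
    and M0: "\<And>i. i \<le> n \<Longrightarrow> i \<noteq> j \<Longrightarrow> prob_space (M0 i) \<and> sets (M0 i) = sets borel"
    and conv: "\<And>i (f::real\<Rightarrow>real). i \<le> n \<Longrightarrow> i \<noteq> j \<Longrightarrow> continuous_on (J i) f \<Longrightarrow>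
        ((\<lambda>h. set_lebesgue_integral (Mh h i) (J i) f) \<longlongrightarrow> set_lebesgue_integral (M0 i) (J i) f) Fl"
    and e: "0 < e"
  shows "eventually (\<lambda>h. \<forall>t\<in>J j. \<bar>RI n J (Mh h) j F t - RI n J M0 j F t\<bar> < e) Fl"
proof -
  have e3: "0 < e / 3" using e by simp
  obtain cs where cs: "okT n J cs" "\<And>u. u \<in> bx n J \<Longrightarrow> \<bar>F u - tens n cs u\<bar> < e / 3"
    using SW_tens[OF Jc7 F e3] by blast
  have ev: "eventually (\<lambda>h. \<forall>t\<in>J j.
     \<bar>sum_list (map (\<lambda>c. c j t * (\<Prod>i\<in>{..n}-{j}. set_lebesgue_integral (Mh h i) (J i) (c i))) cs)
    - sum_list (map (\<lambda>c. c j t * (\<Prod>i\<in>{..n}-{j}. set_lebesgue_integral (M0 i) (J i) (c i))) cs)\<bar> < e / 3) Fl"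
  proof -
    have convc: "((\<lambda>h. set_lebesgue_integral (Mh h i) (J i) (c i)) \<longlongrightarrow> set_lebesgue_integral (M0 i) (J i) (c i)) Fl"
      if "c \<in> set cs" "i \<le> n" "i \<noteq> j" for c i
    proof -
      have "continuous_on (J i) (c i)" using cs(1) that by (simp add: okT_def)
      then show ?thesis by (rule conv[OF that(2,3)])
    qed
    have "\<forall>e>0. eventually (\<lambda>h. \<forall>t\<in>J j.
     \<bar>sum_list (map (\<lambda>c. c j t * (\<Prod>i\<in>{..n}-{j}. set_lebesgue_integral (Mh h i) (J i) (c i))) cs)
    - sum_list (map (\<lambda>c. c j t * (\<Prod>i\<in>{..n}-{j}. set_lebesgue_integral (M0 i) (J i) (c i))) cs)\<bar> < e) Fl"
      by (rule tens_unif[where Mh=Mh and Mz=M0 and Fl=Fl, OF j cs(1)]) (rule convc)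
    from this[rule_format, OF e3] show ?thesis .
  qed
  show ?thesis using ev Mh
  proof eventually_elim
    case (elim h)
    show ?case
    proof
      fix t assume t: "t \<in> J j"
      have Mhf: "\<And>i. i \<le> n \<Longrightarrow> i \<noteq> j \<Longrightarrow> finite_measure (Mh h i) \<and> sets (Mh h i) = sets borel"
        using elim(2) prob_space.finite_measure by blast
      have M0f: "\<And>i. i \<le> n \<Longrightarrow> i \<noteq> j \<Longrightarrow> finite_measure (M0 i) \<and> sets (M0 i) = sets borel"
        using M0 prob_space.finite_measure by blast
      have Mhp: "\<And>i. i \<le> n \<Longrightarrow> i \<noteq> j \<Longrightarrow> prob_space (Mh h i) \<and> sets (Mh h i) = sets borel"
        using elim(2) by blast
      have a: "\<bar>RI n J (Mh h) j F t - RI n J (Mh h) j (tens n cs) t\<bar> \<le> e / 3"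
        by (rule RI_diff_bound[OF Jint j Mhp F cont_tens[OF cs(1)]]) (use cs(2) e3 in \<open>auto simp: less_imp_le\<close>)
      have b: "\<bar>RI n J M0 j F t - RI n J M0 j (tens n cs) t\<bar> \<le> e / 3"
        by (rule RI_diff_bound[OF Jint j M0 F cont_tens[OF cs(1)]]) (use cs(2) e3 in \<open>auto simp: less_imp_le\<close>)
      have c: "\<bar>RI n J (Mh h) j (tens n cs) t - RI n J M0 j (tens n cs) t\<bar> < e / 3"
      proof -
        have c1: "RI n J (Mh h) j (tens n cs) t = sum_list (map (\<lambda>c. c j t * (\<Prod>i\<in>{..n}-{j}. set_lebesgue_integral (Mh h i) (J i) (c i))) cs)"
          by (rule RI_tens[OF Jc7 j t Mhf cs(1)])
        have c2: "RI n J M0 j (tens n cs) t = sum_list (map (\<lambda>c. c j t * (\<Prod>i\<in>{..n}-{j}. set_lebesgue_integral (M0 i) (J i) (c i))) cs)"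
          by (rule RI_tens[OF Jc7 j t M0f cs(1)])
        show ?thesis unfolding c1 c2 using elim(1) t by blast
      qed
      show "\<bar>RI n J (Mh h) j F t - RI n J M0 j F t\<bar> < e" using a b c by linarith
    qed
  qed
qed

end

definition nuf :: "(real \<Rightarrow> nat \<Rightarrow> real measure) \<Rightarrow> (real \<Rightarrow> nat \<Rightarrow> real measure) \<Rightarrow> (nat \<Rightarrow> real set)
    \<Rightarrow> real \<Rightarrow> nat \<Rightarrow> (real \<Rightarrow> real) \<Rightarrow> real" where
  "nuf NP NM J s i f = set_lebesgue_integral (NP s i) (J i) f - set_lebesgue_integral (NM s i) (J i) f"

lemma MVT_h:
  fixes g g' :: "real \<Rightarrow> real"
  assumes h: "h \<noteq> 0" and d: "\<And>s. \<bar>s - e\<bar> \<le> \<bar>h\<bar> \<Longrightarrow> (g has_real_derivative g' s) (at s)"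
  shows "\<exists>\<xi>. \<bar>\<xi> - e\<bar> \<le> \<bar>h\<bar> \<and> g (e + h) - g e = h * g' \<xi>"
proof (cases "h > 0")
  case True
  have "\<exists>z>e. z < e + h \<and> g (e + h) - g e = (e + h - e) * g' z"
    by (rule MVT2) (use True d in auto)
  then obtain z where z: "e < z" "z < e + h" "g (e + h) - g e = (e + h - e) * g' z" by blast
  then have "\<bar>z - e\<bar> \<le> \<bar>h\<bar>" "g (e + h) - g e = h * g' z" using True by auto
  then show ?thesis by blast
next
  case False
  then have hn: "h < 0" using h by simp
  have "\<exists>z>e + h. z < e \<and> g e - g (e + h) = (e - (e + h)) * g' z"
    by (rule MVT2) (use hn d in auto)
  then obtain z where z: "e + h < z" "z < e" "g e - g (e + h) = (e - (e + h)) * g' z" by blast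
  then have "\<bar>z - e\<bar> \<le> \<bar>h\<bar>" "g (e + h) - g e = h * g' z" using hn by (auto simp: algebra_simps)
  then show ?thesis by blast
qed

lemma LI_cong: "(\<And>i. i \<le> n \<Longrightarrow> M i = M' i) \<Longrightarrow> LI n J M F = LI n J M' F"
  unfolding LI_def by (subst PiM_cong[of "{..n}" "{..n}" M M']) auto

lemma RI_cong: "(\<And>i. i \<le> n \<Longrightarrow> i \<noteq> j \<Longrightarrow> M i = M' i) \<Longrightarrow> RI n J M j F = RI n J M' j F"
  unfolding RI_def by (subst PiM_cong[of "{..n}-{j}" "{..n}-{j}" M M']) auto

lemma nuf_diff:
  assumes "finite_measure (NP s i)" "sets (NP s i) = sets borel" "finite_measure (NM s i)" "sets (NM s i) = sets borel"
    "compact (J i)" "continuous_on (J i) f" "continuous_on (J i) g"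
  shows "nuf NP NM J s i (\<lambda>t. f t - g t) = nuf NP NM J s i f - nuf NP NM J s i g"
proof -
  have "set_integrable (NP s i) (J i) f" "set_integrable (NP s i) (J i) g"
       "set_integrable (NM s i) (J i) f" "set_integrable (NM s i) (J i) g"
    using cont_set_integrable assms by blast+
  then show ?thesis unfolding nuf_def by (simp add: set_integral_diff)
qed

lemma nuf_scale:
  "nuf NP NM J s i (\<lambda>t. a * f t) = a * nuf NP NM J s i f"
  unfolding nuf_def by (simp add: algebra_simps)


context
  fixes n :: nat and J :: "nat \<Rightarrow> real set" and V :: "real set"
    and E NP NM :: "real \<Rightarrow> nat \<Rightarrow> real measure"
  assumes Jint: "\<And>i. i \<le> n \<Longrightarrow> \<exists>a b. a \<le> b \<and> J i = {a..b}"
    and Vo: "open V"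
    and Ep: "\<And>s i. s \<in> V \<Longrightarrow> i \<le> n \<Longrightarrow> prob_space (E s i) \<and> sets (E s i) = sets borel"
    and Nf: "\<And>s i. s \<in> V \<Longrightarrow> i \<le> n \<Longrightarrow> finite_measure (NP s i) \<and> sets (NP s i) = sets borel
               \<and> finite_measure (NM s i) \<and> sets (NM s i) = sets borel"
    and Nc: "\<And>i (f::real\<Rightarrow>real). i \<le> n \<Longrightarrow> continuous_on (J i) f \<Longrightarrow> continuous_on V (\<lambda>s. nuf NP NM J s i f)"
    and EC1: "\<And>i (\<phi>::real\<Rightarrow>real) \<phi>' e. i \<le> n \<Longrightarrow> (\<forall>u\<in>J i. (\<phi> has_real_derivative \<phi>' u) (at u within J i))
               \<Longrightarrow> continuous_on (J i) \<phi>' \<Longrightarrow> e \<in> V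
               \<Longrightarrow> ((\<lambda>e'. set_lebesgue_integral (E e' i) (J i) \<phi>) has_real_derivative nuf NP NM J e i \<phi>') (at e)"
begin

lemma Jc8: "i \<le> n \<Longrightarrow> compact (J i)" by (rule Jc[OF Jint])

lemma Wc:
  fixes f :: "real \<Rightarrow> real"
  assumes i: "i \<le> n" and f: "continuous_on (J i) f"
  shows "continuous_on V (\<lambda>s. set_lebesgue_integral (E s i) (J i) f)"
proof (rule W_cont[OF Vo _ Jc8[OF i] _ f, where D = "\<lambda>e \<phi>'. nuf NP NM J e i \<phi>'"])
  show "\<forall>s\<in>V. prob_space (E s i) \<and> sets (E s i) = sets borel" using Ep i by blast
  show "\<forall>\<phi> \<phi>'. (\<forall>u\<in>J i. (\<phi> has_real_derivative \<phi>' u) (at u within J i)) \<and> continuous_on (J i) \<phi>' \<longrightarrow>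
        (\<forall>e\<in>V. ((\<lambda>e'. set_lebesgue_integral (E e' i) (J i) \<phi>) has_real_derivative nuf NP NM J e i \<phi>') (at e))"
    using EC1[OF i] by blast
qed

lemma BSb:
  assumes e: "e \<in> V" and j: "j \<le> n"
  shows "\<exists>\<delta> Mb. \<delta> > 0 \<and> cball e \<delta> \<subseteq> V \<and> (\<forall>s\<in>cball e \<delta>. \<forall>f. continuous_on (J j) f \<and> (\<forall>t\<in>J j. \<bar>f t\<bar> \<le> 1)
            \<longrightarrow> \<bar>nuf NP NM J s j f\<bar> \<le> Mb)"
proof -
  obtain a b where ab: "a \<le> b" "J j = {a..b}" using Jint[OF j] by blast
  obtain \<delta> Mb where dM: "\<delta> > 0" "cball e \<delta> \<subseteq> V"
    "\<And>s (f::real\<Rightarrow>real). s \<in> cball e \<delta> \<Longrightarrow> continuous_on (J j) f \<Longrightarrow> (\<forall>t\<in>J j. \<bar>f t\<bar> \<le> 1) \<Longrightarrow>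
        \<bar>set_lebesgue_integral (NP s j) (J j) f - set_lebesgue_integral (NM s j) (J j) f\<bar> \<le> Mb"
  proof (rule BS[OF Vo e ab(2,1)])
    show "\<forall>s\<in>V. finite_measure (NP s j) \<and> sets (NP s j) = sets borel \<and> finite_measure (NM s j) \<and> sets (NM s j) = sets borel"
      using Nf j by blast
    show "\<forall>f::real\<Rightarrow>real. continuous_on (J j) f \<longrightarrow> continuous_on V (\<lambda>s. set_lebesgue_integral (NP s j) (J j) f - set_lebesgue_integral (NM s j) (J j) f)"
      using Nc[OF j] unfolding nuf_def by blast
  qed blast
  then show ?thesis unfolding nuf_def by blast
qed

theorem main_deriv:
  fixes F :: "(nat \<Rightarrow> real) \<Rightarrow> real" and D :: "nat \<Rightarrow> (nat \<Rightarrow> real) \<Rightarrow> real"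
  assumes F: "continuous_on (bx n J) F" and Dc: "\<And>j. j \<le> n \<Longrightarrow> continuous_on (bx n J) (D j)"
    and dF: "\<And>j u. j \<le> n \<Longrightarrow> u \<in> bx n J \<Longrightarrow> ((\<lambda>t. F (u(j:=t))) has_real_derivative D j u) (at (u j) within J j)"
    and e: "e \<in> V"
  shows "((\<lambda>s. LI n J (\<lambda>i. E s i) F) has_real_derivative (\<Sum>j\<le>n. nuf NP NM J e j (RI n J (\<lambda>i. E e i) j (D j)))) (at e)"
proof -
  have "\<forall>j\<in>{..n}. \<exists>\<delta> Mb. \<delta> > 0 \<and> cball e \<delta> \<subseteq> V \<and> (\<forall>s\<in>cball e \<delta>. \<forall>f. continuous_on (J j) f \<and> (\<forall>t\<in>J j. \<bar>f t\<bar> \<le> 1)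
            \<longrightarrow> \<bar>nuf NP NM J s j f\<bar> \<le> Mb)"
    using BSb[OF e] by blast
  then obtain dl Mb where dlM: "\<And>j. j \<in> {..n} \<Longrightarrow> dl j > 0 \<and> cball e (dl j) \<subseteq> V \<and> (\<forall>s\<in>cball e (dl j). \<forall>f. continuous_on (J j) f \<and> (\<forall>t\<in>J j. \<bar>f t\<bar> \<le> 1)
            \<longrightarrow> \<bar>nuf NP NM J s j f\<bar> \<le> Mb j)"
    by (metis (no_types, lifting) bchoice)
  define d0 where "d0 = Min (dl ` {..n})"
  have d0pos: "d0 > 0" unfolding d0_def using dlM by (subst Min_gr_iff) auto
  have d0le: "d0 \<le> dl j" if "j \<le> n" for j unfolding d0_def using that by (intro Min_le) auto
  have cb: "cball e d0 \<subseteq> V" using dlM[of 0] d0le[of 0] by (meson atMost_iff le0 order_trans subset_cball)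
  have Bnd: "\<bar>nuf NP NM J s j f\<bar> \<le> \<bar>Mb j\<bar> * \<eta>"
    if j: "j \<le> n" and s: "s \<in> cball e d0" and f: "continuous_on (J j) f" and eta: "0 < \<eta>" and fb: "\<forall>t\<in>J j. \<bar>f t\<bar> \<le> \<eta>"
    for j s f \<eta>
  proof -
    have s': "s \<in> cball e (dl j)" using s d0le[OF j] by auto
    have "continuous_on (J j) (\<lambda>t. (1/\<eta>) * f t)" using f by (intro continuous_intros)
    moreover have "\<forall>t\<in>J j. \<bar>(1/\<eta>) * f t\<bar> \<le> 1" using fb eta by (auto simp: abs_mult divide_le_eq)
    ultimately have "\<bar>nuf NP NM J s j (\<lambda>t. (1/\<eta>) * f t)\<bar> \<le> Mb j" using dlM[of j] j s' by auto
    moreover have "nuf NP NM J s j (\<lambda>t. (1/\<eta>) * f t) = (1/\<eta>) * nuf NP NM J s j f" by (rule nuf_scale)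
    ultimately have "(1/\<eta>) * \<bar>nuf NP NM J s j f\<bar> \<le> Mb j" using eta by (simp add: abs_mult)
    then have "\<bar>nuf NP NM J s j f\<bar> \<le> Mb j * \<eta>" using eta by (simp add: field_simps)
    also have "\<dots> \<le> \<bar>Mb j\<bar> * \<eta>" using eta by (simp add: mult_right_mono)
    finally show ?thesis .
  qed
  define sg where "sg h j i = (if i < j then e + h else e)" for h :: real and j i :: nat
  define Fam where "Fam h j = (\<lambda>i. E (sg h j i) i)" for h j
  have sgV: "sg h j i \<in> cball e d0" if "\<bar>h\<bar> < d0" for h j i
    using that d0pos by (auto simp: sg_def dist_real_def)
  have Famp: "prob_space (Fam h j i) \<and> sets (Fam h j i) = sets borel" if "\<bar>h\<bar> < d0" "i \<le> n" for h j i
    unfolding Fam_def using Ep sgV[OF that(1)] cb that(2) by blast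
  have Famf: "finite_measure (Fam h j i) \<and> sets (Fam h j i) = sets borel" if "\<bar>h\<bar> < d0" "i \<le> n" for h j i
    using Famp[OF that] prob_space.finite_measure by blast
  define Phi where "Phi h j = RI n J (Fam h j) j F" for h j
  define Psi where "Psi h j = RI n J (Fam h j) j (D j)" for h j
  have Phi_d: "(Phi h j has_real_derivative Psi h j t) (at t within J j)"
    if "\<bar>h\<bar> < d0" "j \<le> n" "t \<in> J j" for h j t
    unfolding Phi_def Psi_def
    by (rule RI_deriv[OF Jint that(2) _ F Dc[OF that(2)] dF[OF that(2)] that(3)]) (auto intro!: Famp[OF that(1)])
  have Psi_c: "continuous_on (J j) (Psi h j)" if "\<bar>h\<bar> < d0" "j \<le> n" for h j
    unfolding Psi_def by (rule RI_cont[OF Jint that(2) _ Dc[OF that(2)]]) (auto intro!: Famp[OF that(1)])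
  define g where "g h j s = set_lebesgue_integral (E s j) (J j) (Phi h j)" for h j s
  have gd: "(g h j has_real_derivative nuf NP NM J s j (Psi h j)) (at s)"
    if "\<bar>h\<bar> < d0" "j \<le> n" "s \<in> V" for h j s
    unfolding g_def by (rule EC1[OF that(2) _ Psi_c[OF that(1,2)] that(3)]) (use Phi_d[OF that(1,2)] in blast)
  have tmeq: "LI n J (Fam h (Suc j)) F - LI n J (Fam h j) F = g h j (e + h) - g h j e"
    if h: "\<bar>h\<bar> < d0" and j: "j \<le> n" for h j
  proof -
    have a: "LI n J (Fam h (Suc j)) F = set_lebesgue_integral (Fam h (Suc j) j) (J j) (RI n J (Fam h (Suc j)) j F)"
      by (rule LI_decomp[OF Jint j _ F]) (auto intro!: Famf[OF h])
    have b: "LI n J (Fam h j) F = set_lebesgue_integral (Fam h j j) (J j) (RI n J (Fam h j) j F)"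
      by (rule LI_decomp[OF Jint j _ F]) (auto intro!: Famf[OF h])
    have c: "RI n J (Fam h (Suc j)) j F = RI n J (Fam h j) j F"
      by (rule RI_cong) (auto simp: Fam_def sg_def)
    have d: "Fam h (Suc j) j = E (e + h) j" "Fam h j j = E e j" by (auto simp: Fam_def sg_def)
    show ?thesis unfolding a b c d g_def Phi_def ..
  qed
  have tele: "LI n J (\<lambda>i. E (e + h) i) F - LI n J (\<lambda>i. E e i) F = (\<Sum>j\<le>n. g h j (e + h) - g h j e)"
    if h: "\<bar>h\<bar> < d0" for h
  proof -
    have "(\<Sum>j<Suc n. LI n J (Fam h (Suc j)) F - LI n J (Fam h j) F) = LI n J (Fam h (Suc n)) F - LI n J (Fam h 0) F"
      by (rule sum_lessThan_telescope)
    moreover have "LI n J (Fam h (Suc n)) F = LI n J (\<lambda>i. E (e + h) i) F"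
      by (rule LI_cong) (auto simp: Fam_def sg_def)
    moreover have "LI n J (Fam h 0) F = LI n J (\<lambda>i. E e i) F"
      by (rule LI_cong) (auto simp: Fam_def sg_def)
    moreover have "(\<Sum>j<Suc n. LI n J (Fam h (Suc j)) F - LI n J (Fam h j) F) = (\<Sum>j\<le>n. g h j (e + h) - g h j e)"
      unfolding lessThan_Suc_atMost by (rule sum.cong) (auto simp: tmeq[OF h])
    ultimately show ?thesis by simp
  qed
  have mvt: "\<exists>\<xi>. \<bar>\<xi> - e\<bar> \<le> \<bar>h\<bar> \<and> g h j (e + h) - g h j e = h * nuf NP NM J \<xi> j (Psi h j)"
    if "h \<noteq> 0" "\<bar>h\<bar> < d0" "j \<le> n" for h j
  proof (rule MVT_h[OF that(1)])
    fix s assume "\<bar>s - e\<bar> \<le> \<bar>h\<bar>"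
    then have "s \<in> V" using cb that(2) by (auto simp: dist_real_def)
    then show "(g h j has_real_derivative nuf NP NM J s j (Psi h j)) (at s)" by (rule gd[OF that(2,3)])
  qed
  define xi where "xi h j = (SOME \<xi>. \<bar>\<xi> - e\<bar> \<le> \<bar>h\<bar> \<and> g h j (e + h) - g h j e = h * nuf NP NM J \<xi> j (Psi h j))" for h j
  have xi: "\<bar>xi h j - e\<bar> \<le> \<bar>h\<bar> \<and> g h j (e + h) - g h j e = h * nuf NP NM J (xi h j) j (Psi h j)"
    if "h \<noteq> 0" "\<bar>h\<bar> < d0" "j \<le> n" for h j
    unfolding xi_def by (rule someI_ex[OF mvt[OF that]])
  have quot: "(LI n J (\<lambda>i. E (e + h) i) F - LI n J (\<lambda>i. E e i) F) / h = (\<Sum>j\<le>n. nuf NP NM J (xi h j) j (Psi h j))"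
    if "h \<noteq> 0" "\<bar>h\<bar> < d0" for h
  proof -
    have "(\<Sum>j\<le>n. g h j (e + h) - g h j e) = (\<Sum>j\<le>n. h * nuf NP NM J (xi h j) j (Psi h j))"
      using xi[OF that] by (intro sum.cong) auto
    then show ?thesis unfolding tele[OF that(2)] using that(1) by (simp add: sum_distrib_left[symmetric])
  qed
  have ev0: "eventually (\<lambda>h. h \<noteq> 0 \<and> \<bar>h\<bar> < d0) (at (0::real))"
    unfolding eventually_at using d0pos by (intro exI[of _ d0]) (auto simp: dist_real_def)
  have Fam0: "Fam 0 j = (\<lambda>i. E e i)" for j by (rule ext) (simp add: Fam_def sg_def)
  have lim: "((\<lambda>h. nuf NP NM J (xi h j) j (Psi h j)) \<longlongrightarrow> nuf NP NM J e j (Psi 0 j)) (at 0)"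
    if j: "j \<le> n" for j
  proof -
    have xil: "((\<lambda>h. xi h j) \<longlongrightarrow> e) (at 0)"
      unfolding tendsto_iff
    proof (intro allI impI)
      fix r :: real assume r: "0 < r"
      have "eventually (\<lambda>h. h \<noteq> 0 \<and> \<bar>h\<bar> < min r d0) (at (0::real))"
        unfolding eventually_at using r d0pos by (intro exI[of _ "min r d0"]) (auto simp: dist_real_def)
      then show "eventually (\<lambda>h. dist (xi h j) e < r) (at 0)"
      proof eventually_elim
        case (elim h)
        then have "\<bar>xi h j - e\<bar> \<le> \<bar>h\<bar>" using xi[of h j] j by auto
        then show ?case using elim by (simp add: dist_real_def)
      qed
    qed
    have xiV: "eventually (\<lambda>h. xi h j \<in> cball e d0) (at 0)"
      using ev0
    proof eventually_elim
      case (elim h)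
      then have "\<bar>xi h j - e\<bar> \<le> \<bar>h\<bar>" using xi[of h j] j by auto
      then show ?case using elim by (simp add: dist_real_def abs_minus_commute)
    qed
    have P0c: "continuous_on (J j) (Psi 0 j)" using Psi_c[of 0 j] d0pos j by simp
    have part2: "((\<lambda>h. nuf NP NM J (xi h j) j (Psi 0 j)) \<longlongrightarrow> nuf NP NM J e j (Psi 0 j)) (at 0)"
    proof (rule continuous_on_tendsto_compose[OF Nc[OF j P0c] xil e])
      show "eventually (\<lambda>h. xi h j \<in> V) (at 0)" using xiV by eventually_elim (use cb in blast)
    qed
    have part1: "((\<lambda>h. nuf NP NM J (xi h j) j (\<lambda>t. Psi h j t - Psi 0 j t)) \<longlongrightarrow> 0) (at 0)"
      unfolding tendsto_iff
    proof (intro allI impI)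
      fix r :: real assume r: "0 < r"
      define K where "K = \<bar>Mb j\<bar> + 1"
      have K: "K > 0" unfolding K_def by simp
      define \<eta> where "\<eta> = r / (2 * K)"
      have eta: "\<eta> > 0" unfolding \<eta>_def using r K by simp
      have conv: "((\<lambda>h. set_lebesgue_integral (Fam h j i) (J i) f) \<longlongrightarrow> set_lebesgue_integral (E e i) (J i) f) (at 0)"
        if "i \<le> n" "i \<noteq> j" "continuous_on (J i) f" for i and f :: "real \<Rightarrow> real"
      proof -
        have l1: "((\<lambda>h::real. e + h) \<longlongrightarrow> e + 0) (at 0)" by (intro tendsto_intros)
        have sgl: "((\<lambda>h. sg h j i) \<longlongrightarrow> e) (at 0)"
          using l1 by (cases "i < j") (simp_all add: sg_def)
        have "eventually (\<lambda>h. sg h j i \<in> V) (at 0)" using ev0 by eventually_elim (use sgV cb in blast)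
        from continuous_on_tendsto_compose[OF Wc[OF that(1,3)] sgl e this]
        show ?thesis unfolding Fam_def .
      qed
      have evu: "eventually (\<lambda>h. \<forall>t\<in>J j. \<bar>RI n J (Fam h j) j (D j) t - RI n J (\<lambda>i. E e i) j (D j) t\<bar> < \<eta>) (at 0)"
      proof (rule RI_unif[OF Jint j Dc[OF j] _ _ conv eta])
        show "eventually (\<lambda>h. \<forall>i\<le>n. i \<noteq> j \<longrightarrow> prob_space (Fam h j i) \<and> sets (Fam h j i) = sets borel) (at 0)"
          using ev0 by eventually_elim (auto intro!: Famp)
        show "\<And>i. i \<le> n \<Longrightarrow> i \<noteq> j \<Longrightarrow> prob_space (E e i) \<and> sets (E e i) = sets borel"
          using Ep e by blast
      qed auto
      show "eventually (\<lambda>h. dist (nuf NP NM J (xi h j) j (\<lambda>t. Psi h j t - Psi 0 j t)) 0 < r) (at 0)"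
        using evu ev0 xiV
      proof eventually_elim
        case (elim h)
        have c: "continuous_on (J j) (\<lambda>t. Psi h j t - Psi 0 j t)"
          using Psi_c[of h j] Psi_c[of 0 j] elim(2) d0pos j by (intro continuous_on_diff) auto
        have bnd: "\<forall>t\<in>J j. \<bar>Psi h j t - Psi 0 j t\<bar> \<le> \<eta>"
          using elim(1) unfolding Psi_def Fam0 by (auto simp: less_imp_le)
        have "\<bar>nuf NP NM J (xi h j) j (\<lambda>t. Psi h j t - Psi 0 j t)\<bar> \<le> \<bar>Mb j\<bar> * \<eta>"
          by (rule Bnd[OF j elim(3) c eta bnd])
        also have "\<dots> < K * \<eta>" unfolding K_def using eta by (simp add: distrib_right)
        also have "\<dots> = r / 2" unfolding \<eta>_def using K by simp
        finally show ?case using r by (simp add: dist_real_def)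
      qed
    qed
    have split: "eventually (\<lambda>h. nuf NP NM J (xi h j) j (\<lambda>t. Psi h j t - Psi 0 j t) + nuf NP NM J (xi h j) j (Psi 0 j)
          = nuf NP NM J (xi h j) j (Psi h j)) (at 0)"
      using ev0 xiV
    proof eventually_elim
      case (elim h)
      have xV: "xi h j \<in> V" using elim(2) cb by blast
      have "nuf NP NM J (xi h j) j (\<lambda>t. Psi h j t - Psi 0 j t) = nuf NP NM J (xi h j) j (Psi h j) - nuf NP NM J (xi h j) j (Psi 0 j)"
        by (rule nuf_diff) (use Nf[OF xV j] Jc8[OF j] Psi_c[of h j] Psi_c[of 0 j] elim(1) d0pos j in auto)
      then show ?case by simp
    qed
    have "((\<lambda>h. nuf NP NM J (xi h j) j (\<lambda>t. Psi h j t - Psi 0 j t) + nuf NP NM J (xi h j) j (Psi 0 j)) \<longlongrightarrow> 0 + nuf NP NM J e j (Psi 0 j)) (at 0)"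
      by (rule tendsto_add[OF part1 part2])
    then show ?thesis using split by (simp add: Lim_transform_eventually)
  qed
  have "((\<lambda>h. (LI n J (\<lambda>i. E (e + h) i) F - LI n J (\<lambda>i. E e i) F) / h) \<longlongrightarrow> (\<Sum>j\<le>n. nuf NP NM J e j (Psi 0 j))) (at 0)"
  proof (rule Lim_transform_eventually)
    show "((\<lambda>h. \<Sum>j\<le>n. nuf NP NM J (xi h j) j (Psi h j)) \<longlongrightarrow> (\<Sum>j\<le>n. nuf NP NM J e j (Psi 0 j))) (at 0)"
      by (rule tendsto_sum) (use lim in auto)
    show "\<forall>\<^sub>F h in at 0. (\<Sum>j\<le>n. nuf NP NM J (xi h j) j (Psi h j)) = (LI n J (\<lambda>i. E (e + h) i) F - LI n J (\<lambda>i. E e i) F) / h"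
      using ev0 by eventually_elim (simp add: quot)
  qed
  then show ?thesis unfolding DERIV_def Psi_def Fam0 .
qed

end

lemma deriv_single: "(f has_real_derivative d) (at a within {a})"
proof -
  have "at a within {a} = bot" by (simp add: at_within_def)
  then show ?thesis by (simp add: has_field_derivative_def has_derivative_def bounded_linear_mult_right)
qed

lemma abs_deriv:
  fixes y :: real
  assumes "y \<noteq> 0"
  shows "(abs has_real_derivative sgn y) (at y)"
proof -
  have a: "((\<lambda>x. sgn y * x) has_real_derivative sgn y) (at y)" by (auto intro!: derivative_eq_intros)
  have b: "open {z. sgn z = sgn y}"
  proof (cases "y > 0")
    case True then have "{z. sgn z = sgn y} = {0<..}" by (auto simp: sgn_if split: if_splits)
    then show ?thesis by simp
  next
    case False then have "y < 0" using assms by simp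
    then have "{z. sgn z = sgn y} = {..<0}" by (auto simp: sgn_if split: if_splits)
    then show ?thesis by simp
  qed
  have c: "\<And>z. z \<in> {z. sgn z = sgn y} \<Longrightarrow> sgn y * z = \<bar>z\<bar>"
    by (auto simp: sgn_if abs_if split: if_splits)
  have "y \<in> {z. sgn z = sgn y}" by simp
  from has_field_derivative_transform_within_open[OF a b this c] show ?thesis by (simp add: abs_real_def[symmetric])
qed

lemma gcomp_cong:
  assumes "\<And>j. j \<le> n \<Longrightarrow> u j = v j"
  shows "gcomp gb n u x = gcomp gb n v x"
proof -
  have "foldr (\<lambda>j f. gb j (u j) \<circ> f) [0..<Suc n] id = foldr (\<lambda>j f. gb j (v j) \<circ> f) [0..<Suc n] id"
    by (rule foldr_cong) (use assms in auto)
  then show ?thesis unfolding gcomp_def by simp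
qed

lemma foldr_range:
  assumes "\<forall>j\<in>set l. \<forall>t\<in>I (k j). \<forall>x\<in>{0..1::real}. gb j t x \<in> {0..1}" "\<forall>j\<in>set l. u j \<in> I (k j)"
  shows "\<forall>x\<in>{0..1}. foldr (\<lambda>j f. gb j (u j) \<circ> f) l id x \<in> {0..1::real}"
  using assms by (induction l) auto

lemma gcomp_range:
  assumes gb_X: "\<forall>j\<le>n. \<forall>t\<in>I (k j). \<forall>x\<in>{0..1}. gb j t x \<in> {0..1}"
    and gb0: "\<forall>t\<in>I (k 0). \<forall>x\<in>{0..1}. gb 0 t x \<in> {dl..dh}"
    and u: "\<And>j. j \<le> n \<Longrightarrow> u j \<in> I (k j)" and x: "x \<in> {0..1}"
  shows "gcomp gb n u x \<in> {dl..dh}"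
proof -
  have "[0..<Suc n] = 0 # [1..<Suc n]" by (simp add: upt_rec)
  then have eq: "gcomp gb n u x = gb 0 (u 0) (foldr (\<lambda>j f. gb j (u j) \<circ> f) [1..<Suc n] id x)"
    unfolding gcomp_def by simp
  have "foldr (\<lambda>j f. gb j (u j) \<circ> f) [1..<Suc n] id x \<in> {0..1}"
    using foldr_range[of "[1..<Suc n]" I k gb u] gb_X u x by auto
  then show ?thesis unfolding eq using gb0 u[of 0] by blast
qed

lemma gbox_slice:
  assumes w: "w \<in> gbox I k n" and j: "j \<le> n"
  shows "{t. w(j:=t) \<in> gbox I k n} = I (k j)"
  using w j unfolding gbox_def by auto

lemma gbox_slice_x:
  assumes w: "w \<in> gbox I k n"
  shows "{t. w(Suc n:=t) \<in> gbox I k n} = {0..1}"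
  using w unfolding gbox_def by auto

lemma up_gbox:
  assumes "u \<in> bx n (\<lambda>i. I (k i))" "x \<in> {0..1}"
  shows "u(Suc n := x) \<in> gbox I k n"
  using assms unfolding gbox_def bx_def by (auto simp: PiE_iff)

lemma cont_up: "continuous_on S (\<lambda>u::nat\<Rightarrow>real. u(Suc n := x))"
proof (rule continuous_on_coordinatewise_then_product)
  fix i
  show "continuous_on S (\<lambda>u::nat\<Rightarrow>real. (u(Suc n := x)) i)"
    by (cases "i = Suc n") (auto intro: continuous_on_subset[OF continuous_on_product_coordinates])
qed

lemma Ck3_unpack:
  assumes "Ck_on 3 N B f"
  shows "continuous_on B f"
   and "\<And>i w. i \<in> N \<Longrightarrow> w \<in> B \<Longrightarrow> ((\<lambda>t. f (w(i:=t))) has_real_derivative pderiv_box B i f w) (at (w i) within {t. w(i:=t) \<in> B})"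
   and "\<And>i. i \<in> N \<Longrightarrow> continuous_on B (pderiv_box B i f)"
   and "\<And>i i' w. i \<in> N \<Longrightarrow> i' \<in> N \<Longrightarrow> w \<in> B \<Longrightarrow> ((\<lambda>t. pderiv_box B i f (w(i':=t))) has_real_derivative pderiv_box B i' (pderiv_box B i f) w) (at (w i') within {t. w(i':=t) \<in> B})"
   and "\<And>i i'. i \<in> N \<Longrightarrow> i' \<in> N \<Longrightarrow> continuous_on B (pderiv_box B i' (pderiv_box B i f))"
  using assms by (simp_all add: numeral_3_eq_3)

lemma sgn_cont_nz:
  fixes g :: "'a::topological_space \<Rightarrow> real"
  assumes "continuous_on S g" "\<And>w. w \<in> S \<Longrightarrow> g w \<noteq> 0"
  shows "continuous_on S (\<lambda>w. sgn (g w))"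
proof -
  have "continuous_on S (\<lambda>w. g w / \<bar>g w\<bar>)"
    using assms by (intro continuous_intros) auto
  moreover have "\<And>w. w \<in> S \<Longrightarrow> g w / \<bar>g w\<bar> = sgn (g w)" using assms(2) by (simp add: sgn_if)
  ultimately show ?thesis by (rule continuous_on_eq) auto
qed

theorem lemma4p2:
  fixes V :: "real set"
    and L n :: nat
    and I :: "nat \<Rightarrow> real set"
    and dl dh :: real
    and p dp :: "real \<Rightarrow> nat \<Rightarrow> real"
    and eta nup num :: "real \<Rightarrow> nat \<Rightarrow> real measure"
    and k :: "nat \<Rightarrow> nat"
    and gb :: "nat \<Rightarrow> real \<Rightarrow> real \<Rightarrow> real"
    and hh hh' :: "real \<Rightarrow> real"
  assumes V_open: "open V"
    and Delta: "0 \<le> dl" "dl \<le> dh" "dh \<le> 1"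
    and I_int: "\<forall>j\<in>{1..L}. \<exists>lo hi. lo \<le> hi \<and> I j = {lo..hi}"
    and p_prob: "\<forall>e\<in>V. (\<forall>j\<in>{1..L}. 0 \<le> p e j) \<and> (\<Sum>j=1..L. p e j) = 1"
    and p_C1: "\<forall>j\<in>{1..L}. (\<forall>e\<in>V. ((\<lambda>e'. p e' j) has_real_derivative dp e j) (at e))
                              \<and> continuous_on V (\<lambda>e. dp e j)"
    and eta_prob: "\<forall>e\<in>V. \<forall>j\<in>{1..L}. prob_space (eta e j) \<and> sets (eta e j) = sets borel
                              \<and> emeasure (eta e j) (UNIV - I j) = 0"
    and nu_fin: "\<forall>e\<in>V. \<forall>j\<in>{1..L}.
                   finite_measure (nup e j) \<and> sets (nup e j) = sets borel \<and> emeasure (nup e j) (UNIV - I j) = 0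
                 \<and> finite_measure (num e j) \<and> sets (num e j) = sets borel \<and> emeasure (num e j) (UNIV - I j) = 0"
    and nu_cont: "\<forall>j\<in>{1..L}. \<forall>f::real \<Rightarrow> real. continuous_on (I j) f \<longrightarrow>
                   continuous_on V (\<lambda>e. set_lebesgue_integral (nup e j) (I j) f
                                        - set_lebesgue_integral (num e j) (I j) f)"
    and eta_C1: "\<forall>j\<in>{1..L}. \<forall>\<phi> \<phi>'.
                   (\<forall>u\<in>I j. (\<phi> has_real_derivative \<phi>' u) (at u within I j)) \<and> continuous_on (I j) \<phi>'
                   \<longrightarrow> (\<forall>e\<in>V. ((\<lambda>e'. set_lebesgue_integral (eta e' j) (I j) \<phi>) has_real_derivative
                          (set_lebesgue_integral (nup e j) (I j) \<phi>' - set_lebesgue_integral (num e j) (I j) \<phi>'))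
                          (at e))"
    and k_range: "\<forall>j\<le>n. k j \<in> {1..L}"
    and gb_X: "\<forall>j\<le>n. \<forall>t\<in>I (k j). \<forall>x\<in>{0..1}. gb j t x \<in> {0..1}"
    and gb0_Delta: "\<forall>t\<in>I (k 0). \<forall>x\<in>{0..1}. gb 0 t x \<in> {dl..dh}"
    and g_C3: "Ck_on 3 {..Suc n} (gbox I k n) (gvec gb n)"
    and g'_nz: "\<forall>w\<in>gbox I k n. pderiv_box (gbox I k n) (Suc n) (gvec gb n) w \<noteq> 0"
    and hh_C1: "\<forall>y\<in>{dl..dh}. (hh has_real_derivative hh' y) (at y within {dl..dh})"
               "continuous_on {dl..dh} hh'"
  shows "\<forall>e\<in>V. \<forall>x\<in>{0..1}.
     let da = (\<Sum>j\<le>n. dp e (k j) * (\<Prod>i\<in>{..n} - {j}. p e (k i)));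
         dB = (\<Sum>j\<le>n. Pz_int (eta e) (nup e (k j)) (num e (k j)) j k I n
                 (\<lambda>u. hh' (gcomp gb n u x) * gder gb I k n j u x * \<bar>gder gb I k n (Suc n) u x\<bar>
                      + hh (gcomp gb n u x) * absgder_der gb I k n j u x))
     in ((\<lambda>e'. a_word (p e') n k) has_real_derivative da) (at e)
      \<and> ((\<lambda>e'. B_word (eta e') gb I k n hh x) has_real_derivative dB) (at e)
      \<and> ((\<lambda>e'. psi_hat (p e') (eta e') gb I k n hh x) has_real_derivative
             (da * B_word (eta e) gb I k n hh x + a_word (p e) n k * dB)) (at e)"
proof (intro ballI)
  fix e x :: real
  assume e: "e \<in> V" and x: "x \<in> {0..1}"
  define J where "J i = I (k i)" for i
  define E where "E s i = eta s (k i)" for s i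
  define NP where "NP s i = nup s (k i)" for s i
  define NM where "NM s i = num s (k i)" for s i
  define GB where "GB = gbox I k n"
  define gv where "gv = gvec gb n"
  define pd where "pd i = pderiv_box GB i gv" for i
  define AD where "AD j w = pderiv_box GB j (\<lambda>w. \<bar>pd (Suc n) w\<bar>) w" for j w
  define up where "up u = u(Suc n := x)" for u :: "nat \<Rightarrow> real"
  have Jint: "\<And>i. i \<le> n \<Longrightarrow> \<exists>a b. a \<le> b \<and> J i = {a..b}"
    using I_int k_range unfolding J_def by blast
  have Ep: "\<And>s i. s \<in> V \<Longrightarrow> i \<le> n \<Longrightarrow> prob_space (E s i) \<and> sets (E s i) = sets borel"
    using eta_prob k_range unfolding E_def by blast
  have Nf: "\<And>s i. s \<in> V \<Longrightarrow> i \<le> n \<Longrightarrow> finite_measure (NP s i) \<and> sets (NP s i) = sets borel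
               \<and> finite_measure (NM s i) \<and> sets (NM s i) = sets borel"
    using nu_fin k_range unfolding NP_def NM_def by blast
  have Nc: "\<And>i (f::real\<Rightarrow>real). i \<le> n \<Longrightarrow> continuous_on (J i) f \<Longrightarrow> continuous_on V (\<lambda>s. nuf NP NM J s i f)"
    using nu_cont k_range unfolding nuf_def NP_def NM_def J_def by blast
  have EC1: "\<And>i (\<phi>::real\<Rightarrow>real) \<phi>' e. i \<le> n \<Longrightarrow> (\<forall>u\<in>J i. (\<phi> has_real_derivative \<phi>' u) (at u within J i))
               \<Longrightarrow> continuous_on (J i) \<phi>' \<Longrightarrow> e \<in> V
               \<Longrightarrow> ((\<lambda>e'. set_lebesgue_integral (E e' i) (J i) \<phi>) has_real_derivative nuf NP NM J e i \<phi>') (at e)"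
  proof -
    fix i and \<phi> :: "real \<Rightarrow> real" and \<phi>' e
    assume i: "i \<le> n" and d: "\<forall>u\<in>J i. (\<phi> has_real_derivative \<phi>' u) (at u within J i)" and c: "continuous_on (J i) \<phi>'" and e: "e \<in> V"
    have ki: "k i \<in> {1..L}" using k_range i by blast
    have "\<forall>e\<in>V. ((\<lambda>e'. set_lebesgue_integral (eta e' (k i)) (I (k i)) \<phi>) has_real_derivative
                          (set_lebesgue_integral (nup e (k i)) (I (k i)) \<phi>' - set_lebesgue_integral (num e (k i)) (I (k i)) \<phi>'))
                          (at e)"
      using eta_C1 ki d c unfolding J_def by blast
    then show "((\<lambda>e'. set_lebesgue_integral (E e' i) (J i) \<phi>) has_real_derivative nuf NP NM J e i \<phi>') (at e)"
      using e unfolding E_def J_def nuf_def NP_def NM_def by blast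
  qed
  have C3: "Ck_on 3 {..Suc n} GB gv" using g_C3 unfolding GB_def gv_def .
  have gvc: "continuous_on GB gv" by (rule Ck3_unpack(1)[OF C3])
  have gvd: "\<And>i w. i \<le> Suc n \<Longrightarrow> w \<in> GB \<Longrightarrow> ((\<lambda>t. gv (w(i:=t))) has_real_derivative pd i w) (at (w i) within {t. w(i:=t) \<in> GB})"
    unfolding pd_def using Ck3_unpack(2)[OF C3] by simp
  have pdc: "\<And>i. i \<le> Suc n \<Longrightarrow> continuous_on GB (pd i)"
    unfolding pd_def using Ck3_unpack(3)[OF C3] by simp
  have pdd: "\<And>i w. i \<le> Suc n \<Longrightarrow> w \<in> GB \<Longrightarrow> ((\<lambda>t. pd (Suc n) (w(i:=t))) has_real_derivative pderiv_box GB i (pd (Suc n)) w) (at (w i) within {t. w(i:=t) \<in> GB})"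
    unfolding pd_def using Ck3_unpack(4)[OF C3] by simp
  have pddc: "\<And>i. i \<le> Suc n \<Longrightarrow> continuous_on GB (pderiv_box GB i (pd (Suc n)))"
    unfolding pd_def using Ck3_unpack(5)[OF C3] by simp
  have hhc: "continuous_on {dl..dh} hh"
    using hh_C1(1) by (meson DERIV_continuous continuous_on_eq_continuous_within)
  have hh'c: "continuous_on {dl..dh} hh'" by (rule hh_C1(2))
  have range: "gv w \<in> {dl..dh}" if "w \<in> GB" for w
  proof -
    have "gv w = gcomp gb n w (w (Suc n))" unfolding gv_def gvec_def ..
    also have "\<dots> \<in> {dl..dh}"
      by (rule gcomp_range[where n=n and I=I and k=k and gb=gb and dl=dl and dh=dh, OF gb_X gb0_Delta]) (use that in \<open>auto simp: GB_def gbox_def\<close>)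
    finally show ?thesis .
  qed
  have pdnz: "pd (Suc n) w \<noteq> 0" if "w \<in> GB" for w
    using g'_nz that unfolding pd_def GB_def gv_def by blast
  have upGB: "up u \<in> GB" if "u \<in> bx n J" for u
    unfolding up_def GB_def using up_gbox[of u n I k x] that x unfolding J_def by simp
  have upc: "continuous_on (bx n J) up" unfolding up_def by (rule cont_up)
  have compc: "continuous_on (bx n J) (\<lambda>u. \<Phi> (up u))" if "continuous_on GB \<Phi>" for \<Phi> :: "(nat \<Rightarrow> real) \<Rightarrow> real"
    by (rule continuous_on_compose2[OF that upc]) (use upGB in blast)
  have hgc: "continuous_on GB (\<lambda>w. hh (gv w))"
    by (rule continuous_on_compose2[OF hhc gvc]) (use range in blast)
  have h'gc: "continuous_on GB (\<lambda>w. hh' (gv w))"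
    by (rule continuous_on_compose2[OF hh'c gvc]) (use range in blast)
  have gcomp_eq: "gcomp gb n u x = gv (up u)" for u
  proof -
    have "gv (up u) = gcomp gb n (up u) x" unfolding gv_def gvec_def up_def by simp
    also have "\<dots> = gcomp gb n u x" by (rule gcomp_cong) (simp add: up_def)
    finally show ?thesis by simp
  qed
  have gder_eq: "gder gb I k n i u x = pd i (up u)" for i u
    unfolding gder_def pd_def GB_def gv_def up_def ..
  have absd_eq: "absgder_der gb I k n j u x = AD j (up u)" for j u
    unfolding absgder_der_def AD_def pd_def GB_def gv_def up_def ..
  define F where "F u = hh (gcomp gb n u x) * \<bar>gder gb I k n (Suc n) u x\<bar>" for u
  define D where "D j u = hh' (gcomp gb n u x) * gder gb I k n j u x * \<bar>gder gb I k n (Suc n) u x\<bar>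
                      + hh (gcomp gb n u x) * absgder_der gb I k n j u x" for j u
  have F_eq: "F u = hh (gv (up u)) * \<bar>pd (Suc n) (up u)\<bar>" for u
    unfolding F_def gcomp_eq gder_eq ..
  have D_eq: "D j u = hh' (gv (up u)) * pd j (up u) * \<bar>pd (Suc n) (up u)\<bar> + hh (gv (up u)) * AD j (up u)" for j u
    unfolding D_def gcomp_eq gder_eq absd_eq ..
  have slice: "{t. w(j:=t) \<in> GB} = J j" if "w \<in> GB" "j \<le> n" for w j
    unfolding GB_def J_def by (rule gbox_slice) (use that in \<open>auto simp: GB_def\<close>)
  have AD_deriv: "((\<lambda>t. \<bar>pd (Suc n) (w(j:=t))\<bar>) has_real_derivative AD j w) (at (w j) within {t. w(j:=t) \<in> GB})"
    and AD_deriv': "((\<lambda>t. \<bar>pd (Suc n) (w(j:=t))\<bar>) has_real_derivative sgn (pd (Suc n) w) * pderiv_box GB j (pd (Suc n)) w) (at (w j) within {t. w(j:=t) \<in> GB})"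
    if "w \<in> GB" "j \<le> n" for w j
  proof -
    have jj: "j \<le> Suc n" using that(2) by simp
    have pdj: "((\<lambda>t. pd (Suc n) (w(j:=t))) has_real_derivative pderiv_box GB j (pd (Suc n)) w) (at (w j) within {t. w(j:=t) \<in> GB})"
      by (rule pdd[OF jj that(1)])
    have nz: "pd (Suc n) (w(j := w j)) \<noteq> 0" using pdnz[OF that(1)] by simp
    have ab: "(abs has_real_derivative sgn (pd (Suc n) (w(j := w j)))) (at ((\<lambda>t. pd (Suc n) (w(j:=t))) (w j)))"
      using abs_deriv[OF nz] by simp
    from DERIV_chain2[OF ab pdj]
    show d3: "((\<lambda>t. \<bar>pd (Suc n) (w(j:=t))\<bar>) has_real_derivative sgn (pd (Suc n) w) * pderiv_box GB j (pd (Suc n)) w) (at (w j) within {t. w(j:=t) \<in> GB})"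
      by simp
    show "((\<lambda>t. \<bar>pd (Suc n) (w(j:=t))\<bar>) has_real_derivative AD j w) (at (w j) within {t. w(j:=t) \<in> GB})"
      unfolding AD_def pderiv_box_def by (rule someI[of _ "sgn (pd (Suc n) w) * pderiv_box GB j (pd (Suc n)) w"]) (rule d3)
  qed
  have ADc: "continuous_on GB (AD j)" if j: "j \<le> n" for j
  proof -
    obtain a b where ab: "a \<le> b" "J j = {a..b}" using Jint[OF j] by blast
    show ?thesis
    proof (cases "a < b")
      case True
      have eq: "AD j w = sgn (pd (Suc n) w) * pderiv_box GB j (pd (Suc n)) w" if w: "w \<in> GB" for w
      proof -
        have "w j \<in> J j" using w j by (auto simp: GB_def gbox_def J_def)
        then have wj: "w j \<in> cbox a b" using ab(2) by simp
        show ?thesis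
          using vector_derivative_unique_within_closed_interval[OF True wj]
            AD_deriv[OF w j] AD_deriv'[OF w j] unfolding slice[OF w j] ab(2)
          by (simp add: has_real_derivative_iff_has_vector_derivative)
      qed
      have "continuous_on GB (\<lambda>w. sgn (pd (Suc n) w) * pderiv_box GB j (pd (Suc n)) w)"
        by (intro continuous_on_mult sgn_cont_nz pdc pddc) (use j pdnz in auto)
      then show ?thesis by (rule continuous_on_eq) (simp add: eq)
    next
      case False
      then have Ja: "J j = {a}" using ab by auto
      have eq: "AD j w = (SOME d::real. True)" if w: "w \<in> GB" for w
      proof -
        have "w j \<in> J j" using w j by (auto simp: GB_def gbox_def J_def)
        then have wj: "w j = a" using Ja by simp
        have "(\<lambda>d. ((\<lambda>t. \<bar>pd (Suc n) (w(j:=t))\<bar>) has_real_derivative d) (at (w j) within {t. w(j:=t) \<in> GB})) = (\<lambda>d. True)"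
          unfolding slice[OF w j] Ja wj by (simp add: deriv_single)
        then show ?thesis unfolding AD_def pderiv_box_def by simp
      qed
      have "continuous_on GB (\<lambda>w. (SOME d::real. True))" by (rule continuous_on_const)
      then show ?thesis by (rule continuous_on_eq) (simp add: eq)
    qed
  qed
  have Fc: "continuous_on (bx n J) F"
  proof -
    have "continuous_on (bx n J) (\<lambda>u. hh (gv (up u)) * \<bar>pd (Suc n) (up u)\<bar>)"
      by (intro continuous_on_mult compc hgc continuous_on_rabs pdc) auto
    then show ?thesis by (rule continuous_on_eq) (simp add: F_eq)
  qed
  have Dc: "continuous_on (bx n J) (D j)" if j: "j \<le> n" for j
  proof -
    have "continuous_on (bx n J) (\<lambda>u. hh' (gv (up u)) * pd j (up u) * \<bar>pd (Suc n) (up u)\<bar> + hh (gv (up u)) * AD j (up u))"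
      by (intro continuous_on_add continuous_on_mult compc h'gc hgc continuous_on_rabs pdc ADc) (use j in auto)
    then show ?thesis by (rule continuous_on_eq) (simp add: D_eq)
  qed
  have dF: "((\<lambda>t. F (u(j:=t))) has_real_derivative D j u) (at (u j) within J j)"
    if j: "j \<le> n" and u: "u \<in> bx n J" for j u
  proof -
    define w where "w = up u"
    have w: "w \<in> GB" unfolding w_def by (rule upGB[OF u])
    have wj: "w j = u j" using j unfolding w_def up_def by simp
    have upt: "up (u(j:=t)) = w(j:=t)" for t using j unfolding w_def up_def by (auto simp: fun_upd_twist)
    have Feq: "F (u(j:=t)) = hh (gv (w(j:=t))) * \<bar>pd (Suc n) (w(j:=t))\<bar>" for t
      unfolding F_eq upt ..
    have d1: "((\<lambda>t. gv (w(j:=t))) has_real_derivative pd j w) (at (u j) within J j)"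
      using gvd[of j w] j w unfolding slice[OF w j] wj by simp
    have sub: "(\<lambda>t. gv (w(j:=t))) ` J j \<subseteq> {dl..dh}"
    proof
      fix y assume "y \<in> (\<lambda>t. gv (w(j:=t))) ` J j"
      then obtain t where t: "t \<in> J j" "y = gv (w(j:=t))" by blast
      have "w(j:=t) \<in> GB" using t(1) slice[OF w j] by blast
      then show "y \<in> {dl..dh}" using range t(2) by blast
    qed
    have "gv w \<in> {dl..dh}" by (rule range[OF w])
    then have hd: "(hh has_real_derivative hh' (gv w)) (at (gv w) within {dl..dh})" using hh_C1(1) by blast
    have gvw: "gv (w(j := u j)) = gv w" using wj by (metis fun_upd_triv)
    have d4: "((\<lambda>t. hh (gv (w(j:=t)))) has_real_derivative hh' (gv w) * pd j w) (at (u j) within J j)"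
    proof -
      have "(hh has_real_derivative hh' (gv w)) (at ((\<lambda>t. gv (w(j:=t))) (u j)) within (\<lambda>t. gv (w(j:=t))) ` J j)"
        using has_field_derivative_subset[OF hd sub] gvw by simp
      from DERIV_image_chain[OF this d1] show ?thesis by (simp add: o_def)
    qed
    have d3: "((\<lambda>t. \<bar>pd (Suc n) (w(j:=t))\<bar>) has_real_derivative AD j w) (at (u j) within J j)"
      using AD_deriv[OF w j] unfolding slice[OF w j] wj .
    have "((\<lambda>t. hh (gv (w(j:=t))) * \<bar>pd (Suc n) (w(j:=t))\<bar>) has_real_derivative
        hh' (gv w) * pd j w * \<bar>pd (Suc n) (w(j:=u j))\<bar> + AD j w * hh (gv (w(j:=u j)))) (at (u j) within J j)"
      by (rule DERIV_mult[OF d4 d3])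
    moreover have "hh' (gv w) * pd j w * \<bar>pd (Suc n) (w(j:=u j))\<bar> + AD j w * hh (gv (w(j:=u j))) = D j u"
      unfolding D_eq w_def[symmetric] using wj by (simp add: fun_upd_triv[of w j, unfolded wj] algebra_simps)
    ultimately show ?thesis unfolding Feq by simp
  qed
  have main: "((\<lambda>s. LI n J (\<lambda>i. E s i) F) has_real_derivative (\<Sum>j\<le>n. nuf NP NM J e j (RI n J (\<lambda>i. E e i) j (D j)))) (at e)"
    by (rule main_deriv[OF Jint V_open Ep Nf Nc EC1 Fc Dc dF e])
  have Bw: "B_word (eta s) gb I k n hh x = LI n J (\<lambda>i. E s i) F" for s
    unfolding B_word_def LI_def bx_def J_def E_def F_def ..
  have Pz_eq: "Pz_int (eta e) (nup e (k j)) (num e (k j)) j k I n (D j) = nuf NP NM J e j (RI n J (\<lambda>i. E e i) j (D j))"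
    if j: "j \<le> n" for j
  proof -
    have one: "set_lebesgue_integral (Pz (eta e) (X e (k j)) j k n) (PiE {..n} (\<lambda>i. I (k i))) (D j)
        = set_lebesgue_integral (X e (k j)) (J j) (RI n J (\<lambda>i. E e i) j (D j))"
      if X: "\<And>i. i \<le> n \<Longrightarrow> finite_measure (X e (k i)) \<and> sets (X e (k i)) = sets borel" for X :: "real \<Rightarrow> nat \<Rightarrow> real measure"
    proof -
      define Mx where "Mx i = (if i = j then X e (k j) else E e i)" for i
      have Mx: "\<And>i. i \<le> n \<Longrightarrow> finite_measure (Mx i) \<and> sets (Mx i) = sets borel"
      proof -
        fix i assume i: "i \<le> n"
        show "finite_measure (Mx i) \<and> sets (Mx i) = sets borel"
        proof (cases "i = j")
          case True then show ?thesis unfolding Mx_def using X j by simp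
        next
          case False
          have "prob_space (E e i)" "sets (E e i) = sets borel" using Ep[OF e i] by auto
          then show ?thesis unfolding Mx_def using False prob_space.finite_measure by auto
        qed
      qed
      have "set_lebesgue_integral (Pz (eta e) (X e (k j)) j k n) (PiE {..n} (\<lambda>i. I (k i))) (D j) = LI n J Mx (D j)"
        unfolding Pz_def LI_def bx_def J_def Mx_def E_def ..
      also have "\<dots> = set_lebesgue_integral (Mx j) (J j) (RI n J Mx j (D j))"
        by (rule LI_decomp[OF Jint j Mx Dc[OF j]])
      also have "RI n J Mx j (D j) = RI n J (\<lambda>i. E e i) j (D j)"
        by (rule RI_cong) (simp add: Mx_def)
      also have "Mx j = X e (k j)" by (simp add: Mx_def)
      finally show ?thesis .
    qed
    have "Pz_int (eta e) (nup e (k j)) (num e (k j)) j k I n (D j)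
        = set_lebesgue_integral (nup e (k j)) (J j) (RI n J (\<lambda>i. E e i) j (D j))
        - set_lebesgue_integral (num e (k j)) (J j) (RI n J (\<lambda>i. E e i) j (D j))"
      unfolding Pz_int_def using one[of nup] one[of num] Nf[OF e] unfolding NP_def NM_def by simp
    then show ?thesis unfolding nuf_def NP_def NM_def .
  qed
  define da where "da = (\<Sum>j\<le>n. dp e (k j) * (\<Prod>i\<in>{..n} - {j}. p e (k i)))"
  define dB where "dB = (\<Sum>j\<le>n. Pz_int (eta e) (nup e (k j)) (num e (k j)) j k I n
                 (\<lambda>u. hh' (gcomp gb n u x) * gder gb I k n j u x * \<bar>gder gb I k n (Suc n) u x\<bar>
                      + hh (gcomp gb n u x) * absgder_der gb I k n j u x))"
  have dB_eq: "dB = (\<Sum>j\<le>n. nuf NP NM J e j (RI n J (\<lambda>i. E e i) j (D j)))"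
  proof -
    have "(\<lambda>u. hh' (gcomp gb n u x) * gder gb I k n j u x * \<bar>gder gb I k n (Suc n) u x\<bar>
                      + hh (gcomp gb n u x) * absgder_der gb I k n j u x) = D j" for j
      by (rule ext) (simp add: D_def)
    then show ?thesis unfolding dB_def by (intro sum.cong refl) (simp add: Pz_eq)
  qed
  have dA: "((\<lambda>e'. a_word (p e') n k) has_real_derivative da) (at e)"
  proof -
    have pd1: "((\<lambda>e'. p e' (k j)) has_derivative (\<lambda>y. dp e (k j) * y)) (at e)" if "j \<in> {..n}" for j
      using p_C1 k_range that e unfolding has_field_derivative_def by auto
    have "((\<lambda>e'. \<Prod>j\<in>{..n}. p e' (k j)) has_derivative
           (\<lambda>y. \<Sum>i\<in>{..n}. dp e (k i) * y * (\<Prod>j\<in>{..n} - {i}. p e (k j)))) (at e)"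
      by (rule has_derivative_prod[OF pd1])
    then have "((\<lambda>e'. \<Prod>j\<in>{..n}. p e' (k j)) has_derivative (*) da) (at e)"
      by (rule has_derivative_eq_rhs) (auto simp: da_def fun_eq_iff sum_distrib_left sum_distrib_right algebra_simps)
    then show ?thesis unfolding a_word_def has_field_derivative_def by simp
  qed
  have dBd: "((\<lambda>e'. B_word (eta e') gb I k n hh x) has_real_derivative dB) (at e)"
    unfolding Bw dB_eq by (rule main)
  have dpsi: "((\<lambda>e'. psi_hat (p e') (eta e') gb I k n hh x) has_real_derivative
             (da * B_word (eta e) gb I k n hh x + a_word (p e) n k * dB)) (at e)"
  proof -
    have "((\<lambda>e'. a_word (p e') n k * B_word (eta e') gb I k n hh x) has_real_derivative
             da * B_word (eta e) gb I k n hh x + dB * a_word (p e) n k) (at e)"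
      by (rule DERIV_mult[OF dA dBd])
    then show ?thesis unfolding psi_hat_def by (simp add: algebra_simps)
  qed
  show "let da = (\<Sum>j\<le>n. dp e (k j) * (\<Prod>i\<in>{..n} - {j}. p e (k i)));
         dB = (\<Sum>j\<le>n. Pz_int (eta e) (nup e (k j)) (num e (k j)) j k I n
                 (\<lambda>u. hh' (gcomp gb n u x) * gder gb I k n j u x * \<bar>gder gb I k n (Suc n) u x\<bar>
                      + hh (gcomp gb n u x) * absgder_der gb I k n j u x))
     in ((\<lambda>e'. a_word (p e') n k) has_real_derivative da) (at e)
      \<and> ((\<lambda>e'. B_word (eta e') gb I k n hh x) has_real_derivative dB) (at e)
      \<and> ((\<lambda>e'. psi_hat (p e') (eta e') gb I k n hh x) has_real_derivative
             (da * B_word (eta e) gb I k n hh x + a_word (p e) n k * dB)) (at e)"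
    unfolding Let_def da_def[symmetric] dB_def[symmetric] using dA dBd dpsi by blast
qed

end
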